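(* Let $T$ be a standard Borel space, $X$ a random finite or countable subset of $T$, and $\mathcal A$ an algebra of Borel subsets of $T$ that generates the Borel $\sigma$-field of $T$. Assume that: - $X$ satisfies the independence condition on $\mathcal A$; - $\Pr(t\in X)=0$ for every $t\in T$. Then $X$ is a Poisson process in the sense of Kingman.
   Context: Random finite or countable sets. A random finite or countable subset of $T$ on a standard probability space $\Omega$ is given by random variables $N:\Omega\to\{0,1,2,\dots\}\cup\{\infty\}$ and $X_1,X_2,\dots:\Omega\to T$. It is $X(\omega)=\{X_1(\omega),\dots,X_{N(\omega)}(\omega)\}$, meaning $\{X_1(\omega),X_2(\omega),\dots\}$ if $N(\omega)=\infty$ and $\emptyset$ if $N(\omega)=0$. Independence of fragments. For Borel $B\subset T$, the fragment $B\cap X$ is again such a random set. Fragments $B_1\cap X,\dots,B_n\cap X$ are independent if there exist, on $\Omega$, independent random elements $Z_1,\dots,Z_n$, each of the form $Z_i=(N_i,(X_{i,j})_{j\ge1})$ with $N_i\in\{0,1,\dots,\infty\}$ and $X_{i,j}\in T$, such that a.s. $B_i\cap X=\{X_{i,1},\dots,X_{i,N_i}\}$ for each $i$. Independence condition on $\mathcal A$. $X$ satisfies it if for every $n\ge2$ and every pairwise disjoint $B_1,\dots,B_n\in\mathcal A$ the fragments $B_1\cap X,\dots,B_n\cap X$ are independent. Kingman Poisson process. For Borel $B\subset T$ let $\xi_B(\omega)\in\{0,1,2,\dots,\infty\}$ be the number of points of $B\cap X(\omega)$. $X$ is a Poisson process in the sense of Kingman if: - each $\xi_B$ is measurable; -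 for pairwise disjoint Borel $B_1,\dots,B_n$ the variables $\xi_{B_1},\dots,\xi_{B_n}$ are independent; - each $\xi_B$ has the Poisson distribution with some parameter $\mu(B)\in[0,\infty]$, where $\mu(B)=0$ means $\xi_B=0$ a.s. and $\mu(B)=\infty$ means $\xi_B=\infty$ a.s. *)

theory Defs
  imports "HOL-Probability.Probability"
begin

definition standard_prob_space :: "('w::polish_space) measure \<Rightarrow> bool" where
  "standard_prob_space M \<longleftrightarrow>
     (\<exists>M0. sets M0 = sets (borel :: 'w measure) \<and> prob_space M0 \<and>
           (M = M0 \<or> M = completion M0))"

text \<open>A random finite or countable subset of T, given by N and X_1, X_2, ...
  (the index 0 of the sequence is unused).\<close>
definition random_countable_set ::
    "'w measure \<Rightarrow> ('w \<Rightarrow> enat) \<Rightarrow> (nat \<Rightarrow> 'w \<Rightarrow> 't::topological_space) \<Rightarrow> bool" where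
  "random_countable_set M N X \<longleftrightarrow>
     N \<in> measurable M (count_space UNIV) \<and> (\<forall>j. X j \<in> measurable M borel)"

definition rset :: "('w \<Rightarrow> enat) \<Rightarrow> (nat \<Rightarrow> 'w \<Rightarrow> 't) \<Rightarrow> 'w \<Rightarrow> 't set" where
  "rset N X \<omega> = {X j \<omega> | j. 1 \<le> j \<and> enat j \<le> N \<omega>}"

definition elem_space :: "(enat \<times> (nat \<Rightarrow> 't::topological_space)) measure" where
  "elem_space = count_space UNIV \<Otimes>\<^sub>M (\<Pi>\<^sub>M j\<in>UNIV. borel)"

definition indep_fragments ::
    "'w measure \<Rightarrow> ('w \<Rightarrow> enat) \<Rightarrow> (nat \<Rightarrow> 'w \<Rightarrow> 't::topological_space)
       \<Rightarrow> nat \<Rightarrow> (nat \<Rightarrow> 't set) \<Rightarrow> bool" where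
  "indep_fragments M N X n B \<longleftrightarrow>
     (\<exists>(N' :: nat \<Rightarrow> 'w \<Rightarrow> enat) (X' :: nat \<Rightarrow> nat \<Rightarrow> 'w \<Rightarrow> 't).
        prob_space.indep_vars M (\<lambda>i. elem_space) (\<lambda>i \<omega>. (N' i \<omega>, \<lambda>j. X' i j \<omega>)) {..<n} \<and>
        (\<forall>i<n. AE \<omega> in M. B i \<inter> rset N X \<omega> = rset (N' i) (X' i) \<omega>))"

definition independence_condition ::
    "'w measure \<Rightarrow> ('w \<Rightarrow> enat) \<Rightarrow> (nat \<Rightarrow> 'w \<Rightarrow> 't::topological_space) \<Rightarrow> 't set set \<Rightarrow> bool" where
  "independence_condition M N X \<A> \<longleftrightarrow>
     (\<forall>n B. n \<ge> 2 \<longrightarrow> (\<forall>i<n. B i \<in> \<A>) \<longrightarrow> disjoint_family_on B {..<n} \<longrightarrow>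
        indep_fragments M N X n B)"

definition pcount :: "('w \<Rightarrow> enat) \<Rightarrow> (nat \<Rightarrow> 'w \<Rightarrow> 't) \<Rightarrow> 't set \<Rightarrow> 'w \<Rightarrow> enat" where
  "pcount N X B \<omega> = (if finite (B \<inter> rset N X \<omega>) then enat (card (B \<inter> rset N X \<omega>)) else \<infinity>)"

text \<open>\<xi> has the Poisson distribution with parameter \<mu> \<in> [0,\<infinity>]
  (\<mu> = \<infinity> meaning \<xi> = \<infinity> a.s.; \<mu> = 0 gives \<xi> = 0 a.s.).\<close>
definition poisson_enat :: "'w measure \<Rightarrow> ('w \<Rightarrow> enat) \<Rightarrow> ennreal \<Rightarrow> bool" where
  "poisson_enat M \<xi> \<mu> \<longleftrightarrow>
     (\<mu> = \<infinity> \<longrightarrow> (AE \<omega> in M. \<xi> \<omega> = \<infinity>)) \<and>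
     (\<mu> \<noteq> \<infinity> \<longrightarrow> (\<forall>k::nat. measure M {\<omega> \<in> space M. \<xi> \<omega> = enat k}
                         = exp (- enn2real \<mu>) * enn2real \<mu> ^ k / fact k))"

definition kingman_poisson ::
    "'w measure \<Rightarrow> ('w \<Rightarrow> enat) \<Rightarrow> (nat \<Rightarrow> 'w \<Rightarrow> 't::topological_space) \<Rightarrow> bool" where
  "kingman_poisson M N X \<longleftrightarrow>
     (\<forall>B \<in> sets borel. pcount N X B \<in> measurable M (count_space UNIV)) \<and>
     (\<forall>n (B :: nat \<Rightarrow> 't set). (\<forall>i<n. B i \<in> sets borel) \<longrightarrow> disjoint_family_on B {..<n} \<longrightarrow>
        prob_space.indep_vars M (\<lambda>i. count_space UNIV) (\<lambda>i. pcount N X (B i)) {..<n}) \<and>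
     (\<forall>B \<in> sets borel. \<exists>\<mu>. poisson_enat M (pcount N X B) \<mu>)"

end

theory Submission
  imports Defs
begin

locale kp = prob_space M for M :: "'w measure" +
  fixes N :: "'w \<Rightarrow> enat" and X :: "nat \<Rightarrow> 'w \<Rightarrow> 't::polish_space" and AA :: "'t set set"
  assumes N_meas[measurable]: "N \<in> measurable M (count_space UNIV)"
  and X_meas[measurable]: "\<And>j. X j \<in> measurable M borel"
  and alg: "algebra UNIV AA" and A_borel: "AA \<subseteq> sets borel"
  and gen: "sigma_sets UNIV AA = sets borel"
  and indc: "independence_condition M N X AA"
  and noatom: "\<And>t. measure M {\<omega> \<in> space M. t \<in> rset N X \<omega>} = 0"
begin

definition V :: "'t set \<Rightarrow> 'w set" where
  "V D = {\<omega> \<in> space M. rset N X \<omega> \<inter> D = {}}"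

definition z :: "'t set \<Rightarrow> real" where "z D = prob (V D)"

lemma V_alt: "V D = {\<omega> \<in> space M. \<forall>j. 1 \<le> j \<and> enat j \<le> N \<omega> \<longrightarrow> X j \<omega> \<notin> D}"
  unfolding V_def rset_def by auto

lemma V_sets[measurable]: assumes [measurable]: "D \<in> sets borel" shows "V D \<in> sets M"
  unfolding V_alt by measurable

lemma elem_F_sets:
  assumes [measurable]: "D \<in> sets borel"
  shows "{p :: enat \<times> (nat \<Rightarrow> 't). \<forall>j. 1 \<le> j \<and> enat j \<le> fst p \<longrightarrow> snd p j \<notin> D} \<in> sets elem_space"
proof -
  have [measurable]: "(\<lambda>p. snd p j) \<in> measurable (count_space UNIV \<Otimes>\<^sub>M (\<Pi>\<^sub>M j\<in>UNIV. (borel::'t measure))) borel" for j::nat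
    by (rule measurable_compose[OF measurable_snd measurable_component_singleton]) simp
  have [measurable]: "Measurable.pred (count_space UNIV \<Otimes>\<^sub>M (\<Pi>\<^sub>M j\<in>UNIV. (borel::'t measure))) (\<lambda>p. enat j \<le> fst p)" for j::nat
  proof -
    have "(\<lambda>x::enat. enat j \<le> x) \<circ> fst \<in> measurable (count_space UNIV \<Otimes>\<^sub>M (\<Pi>\<^sub>M j\<in>UNIV. (borel::'t measure))) (count_space UNIV)"
      by (rule measurable_comp[OF measurable_fst]) simp
    then show ?thesis by (simp add: comp_def)
  qed
  have "Measurable.pred elem_space (\<lambda>p :: enat \<times> (nat \<Rightarrow> 't). \<forall>j. 1 \<le> j \<and> enat j \<le> fst p \<longrightarrow> snd p j \<notin> D)"
    unfolding elem_space_def by measurable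
  then show ?thesis by (simp add: elem_space_def Measurable.pred_def space_pair_measure space_PiM)
qed

lemma z_empty: "z {} = 1"
  unfolding z_def V_def by (simp add: prob_space)

lemma mult:
  fixes m :: nat
  assumes A: "\<And>i. i<m \<Longrightarrow> A i \<in> AA" and disj: "disjoint_family_on A {..<m}"
    and D: "\<And>i. i<m \<Longrightarrow> D i \<in> sets borel" and DA: "\<And>i. i<m \<Longrightarrow> D i \<subseteq> A i"
  shows "z (\<Union>i<m. D i) = (\<Prod>i<m. z (D i))"
proof -
  consider "m = 0" | "m = 1" | "m \<ge> 2" by linarith
  then show ?thesis
  proof cases
    case 1 then show ?thesis by (simp add: z_empty)
  next
    case 2 then show ?thesis by (simp add: lessThan_Suc)
  next
    case 3
    from indc[unfolded independence_condition_def, rule_format, OF 3 A disj]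
    obtain N' X' where ind: "indep_vars (\<lambda>i. elem_space) (\<lambda>i \<omega>. (N' i \<omega>, \<lambda>j. X' i j \<omega>)) {..<m}"
      and ae: "\<forall>i<m. AE \<omega> in M. A i \<inter> rset N X \<omega> = rset (N' i) (X' i) \<omega>"
      unfolding indep_fragments_def by blast
    define F where "F i = {p :: enat \<times> (nat \<Rightarrow> 't). \<forall>j. 1 \<le> j \<and> enat j \<le> fst p \<longrightarrow> snd p j \<notin> D i}" for i
    define E where "E i = (\<lambda>\<omega>. (N' i \<omega>, \<lambda>j. X' i j \<omega>)) -` F i \<inter> space M" for i
    have F: "F i \<in> sets elem_space" if "i < m" for i
      unfolding F_def by (rule elem_F_sets[OF D[OF that]])
    have Eev: "E i \<in> events" if "i < m" for i
    proof -
      have "(\<lambda>\<omega>. (N' i \<omega>, \<lambda>j. X' i j \<omega>)) \<in> measurable M elem_space"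
        using ind that unfolding indep_vars_def2 by auto
      then show ?thesis unfolding E_def using F[OF that] by (rule measurable_sets)
    qed
    have prodE: "prob (\<Inter>i\<in>{..<m}. E i) = (\<Prod>i\<in>{..<m}. prob (E i))"
    proof (rule indep_setsD[of _ "{..<m}"])
      show "indep_sets (\<lambda>i. {(\<lambda>\<omega>. (N' i \<omega>, \<lambda>j. X' i j \<omega>)) -` A \<inter> space M |A. A \<in> sets elem_space}) {..<m}"
        using ind unfolding indep_vars_def2 by auto
      show "{..<m} \<noteq> {}" using 3 by (simp add: lessThan_empty_iff)
    qed (auto simp: E_def intro!: F)
    have ae2: "AE \<omega> in M. \<forall>i\<in>{..<m}. (\<omega> \<in> V (D i) \<longleftrightarrow> \<omega> \<in> E i)"
    proof (rule AE_finite_allI)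
      fix i assume "i \<in> {..<m}"
      then have i: "i < m" by simp
      show "AE \<omega> in M. (\<omega> \<in> V (D i) \<longleftrightarrow> \<omega> \<in> E i)"
        using ae[rule_format, OF i]
      proof eventually_elim
        case (elim \<omega>)
        have "rset N X \<omega> \<inter> D i = (A i \<inter> rset N X \<omega>) \<inter> D i" using DA[OF i] by blast
        also have "\<dots> = rset (N' i) (X' i) \<omega> \<inter> D i" using elim by simp
        finally show ?case unfolding V_def E_def F_def rset_def by auto
      qed
    qed simp
    have m0: "{..<m} \<noteq> {}" using 3 by (simp add: lessThan_empty_iff)
    have VU: "V (\<Union>i<m. D i) = (\<Inter>i\<in>{..<m}. V (D i))"
      using m0 unfolding V_def by auto
    have "z (\<Union>i<m. D i) = prob (\<Inter>i\<in>{..<m}. E i)"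
      unfolding z_def VU
      by (rule measure_eq_AE) (use ae2 m0 D Eev in \<open>auto intro!: sets.finite_INT elim!: eventually_mono\<close>)
    also have "\<dots> = (\<Prod>i<m. z (D i))"
      unfolding prodE z_def
    proof (rule prod.cong[OF refl])
      fix i assume "i \<in> {..<m}"
      then show "prob (E i) = prob (V (D i))"
        by (intro measure_eq_AE) (use ae2 D Eev in \<open>auto elim!: eventually_mono\<close>)
    qed
    finally show ?thesis .
  qed
qed

end

lemma sigma_sets_countable_sub:
  assumes "x \<in> sigma_sets \<Omega> S"
  shows "\<exists>S'. countable S' \<and> S' \<subseteq> S \<and> x \<in> sigma_sets \<Omega> S'"
  using assms
proof induct
  case (Basic a) then show ?case by (intro exI[of _ "{a}"]) auto
next
  case Empty then show ?case by (intro exI[of _ "{}"]) (auto intro: sigma_sets.Empty)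
next
  case (Compl a) then show ?case by (auto intro: sigma_sets.Compl)
next
  case (Union a)
  then obtain S' where S': "\<And>i. countable (S' i) \<and> S' i \<subseteq> S \<and> a i \<in> sigma_sets \<Omega> (S' i)" by metis
  show ?case
  proof (intro exI[of _ "\<Union>i. S' i"] conjI)
    show "countable (\<Union>i. S' i)" using S' by auto
    show "(\<Union>i. S' i) \<subseteq> S" using S' by auto
    have "a i \<in> sigma_sets \<Omega> (\<Union>i. S' i)" for i
      using S' sigma_sets_subseteq[of "S' i" "\<Union>i. S' i" \<Omega>] by blast
    then show "(\<Union>i. a i) \<in> sigma_sets \<Omega> (\<Union>i. S' i)" by (rule sigma_sets.Union)
  qed
qed

lemma sigma_sets_nosep:
  assumes "x \<in> sigma_sets UNIV S" "\<forall>c\<in>S. (s \<in> c \<longleftrightarrow> t \<in> c)"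
  shows "s \<in> x \<longleftrightarrow> t \<in> x"
  using assms by induct auto

lemma sep_seq:
  fixes AA :: "'t::polish_space set set"
  assumes alg: "algebra UNIV AA" and gen: "sigma_sets UNIV AA = sets borel"
  shows "\<exists>G :: nat \<Rightarrow> 't set. (\<forall>i. G i \<in> AA) \<and> (\<forall>s t. s \<noteq> t \<longrightarrow> (\<exists>i. (s \<in> G i) \<noteq> (t \<in> G i)))"
proof -
  obtain B :: "'t set set" where B: "countable B" "topological_basis B"
    using ex_countable_basis by blast
  have "\<forall>b\<in>B. \<exists>S'. countable S' \<and> S' \<subseteq> AA \<and> b \<in> sigma_sets UNIV S'"
  proof
    fix b assume "b \<in> B"
    then have "open b" using B(2) topological_basis_open by blast
    then have "b \<in> sigma_sets UNIV AA" unfolding gen by simp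
    then show "\<exists>S'. countable S' \<and> S' \<subseteq> AA \<and> b \<in> sigma_sets UNIV S'"
      by (rule sigma_sets_countable_sub)
  qed
  then obtain S' where S': "\<And>b. b \<in> B \<Longrightarrow> countable (S' b) \<and> S' b \<subseteq> AA \<and> b \<in> sigma_sets UNIV (S' b)"
    by metis
  define C where "C = insert UNIV (\<Union>b\<in>B. S' b)"
  have Cc: "countable C" unfolding C_def using B(1) S' by auto
  have CA: "C \<subseteq> AA" unfolding C_def using S' algebra.top[OF alg] by auto
  have Cne: "C \<noteq> {}" unfolding C_def by auto
  define G where "G = from_nat_into C"
  have rG: "range G = C" unfolding G_def using Cc Cne by simp
  show ?thesis
  proof (intro exI[of _ G] conjI allI impI)
    show "G i \<in> AA" for i using rG CA by auto
    fix s t :: 't assume "s \<noteq> t"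
    then obtain U where U: "open U" "s \<in> U" "t \<notin> U"
      by (metis separation_t1)
    obtain b where b: "b \<in> B" "s \<in> b" "b \<subseteq> U" using topological_basisE[OF B(2) U(1,2)] by blast
    show "\<exists>i. (s \<in> G i) \<noteq> (t \<in> G i)"
    proof (rule ccontr)
      assume "\<not> ?thesis"
      then have ns: "\<forall>c\<in>C. (s \<in> c \<longleftrightarrow> t \<in> c)" using rG by auto
      have "S' b \<subseteq> C" unfolding C_def using b(1) by auto
      then have "b \<in> sigma_sets UNIV C"
        using S'[OF b(1)] sigma_sets_subseteq[of "S' b" C UNIV] by blast
      from sigma_sets_nosep[OF this ns] have "s \<in> b \<longleftrightarrow> t \<in> b" .
      then show False using b U by auto
    qed
  qed
qed

context kp begin

lemma A_empty: "{} \<in> AA" using alg unfolding algebra_iff_Int by blast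
lemma A_compl: "a \<in> AA \<Longrightarrow> UNIV - a \<in> AA" using alg unfolding algebra_iff_Int by blast
lemma A_Int: "a \<in> AA \<Longrightarrow> b \<in> AA \<Longrightarrow> a \<inter> b \<in> AA" using alg unfolding algebra_iff_Int by blast
lemma A_top: "UNIV \<in> AA" using A_compl[OF A_empty] by simp
lemma A_Un: "a \<in> AA \<Longrightarrow> b \<in> AA \<Longrightarrow> a \<union> b \<in> AA" using alg unfolding algebra_iff_Un by blast
lemma A_Diff: "a \<in> AA \<Longrightarrow> b \<in> AA \<Longrightarrow> a - b \<in> AA"
proof -
  assume "a \<in> AA" "b \<in> AA"
  then have "a \<inter> (UNIV - b) \<in> AA" using A_Int A_compl by blast
  moreover have "a \<inter> (UNIV - b) = a - b" by blast
  ultimately show ?thesis by simp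
qed

lemma mult_fin:
  assumes I: "finite I" and A: "\<And>i. i \<in> I \<Longrightarrow> A i \<in> AA" and disj: "disjoint_family_on A I"
    and D: "\<And>i. i \<in> I \<Longrightarrow> D i \<in> sets borel" and DA: "\<And>i. i \<in> I \<Longrightarrow> D i \<subseteq> A i"
  shows "z (\<Union>i\<in>I. D i) = (\<Prod>i\<in>I. z (D i))"
proof -
  obtain h where h: "bij_betw h {0..<card I} I" using ex_bij_betw_nat_finite[OF I] by blast
  then have h': "bij_betw h {..<card I} I" by (simp add: atLeast0LessThan)
  have hI: "h i \<in> I" if "i < card I" for i using h' that by (auto simp: bij_betw_def)
  have "z (\<Union>i<card I. D (h i)) = (\<Prod>i<card I. z (D (h i)))"
  proof (rule mult[where A="\<lambda>i. A (h i)"])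
    show "disjoint_family_on (\<lambda>i. A (h i)) {..<card I}"
      unfolding disjoint_family_on_def
    proof (intro ballI impI)
      fix m n assume mn: "m \<in> {..<card I}" "n \<in> {..<card I}" "m \<noteq> n"
      then have "h m \<noteq> h n" "h m \<in> I" "h n \<in> I" using h' by (auto simp: bij_betw_def inj_on_def)
      then show "A (h m) \<inter> A (h n) = {}" using disj unfolding disjoint_family_on_def by blast
    qed
  qed (use hI A D DA in blast)+
  moreover have "(\<Union>i<card I. D (h i)) = (\<Union>i\<in>I. D i)"
  proof -
    have e: "h ` {..<card I} = I" using h' by (simp add: bij_betw_def)
    have "(\<Union>i\<in>h ` {..<card I}. D i) = (\<Union>i<card I. D (h i))" by simp
    then show ?thesis using e by simp
  qed
  moreover have "(\<Prod>i<card I. z (D (h i))) = (\<Prod>i\<in>I. z (D i))"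
    using prod.reindex_bij_betw[OF h', of "\<lambda>i. z (D i)"] by simp
  ultimately show ?thesis by simp
qed

lemma z_nonneg: "0 \<le> z D" unfolding z_def by simp
lemma z_le1: "z D \<le> 1" unfolding z_def by simp

lemma V_mono: "C \<subseteq> D \<Longrightarrow> V D \<subseteq> V C" unfolding V_def by auto

lemma z_mono: "C \<subseteq> D \<Longrightarrow> C \<in> sets borel \<Longrightarrow> z D \<le> z C"
  unfolding z_def by (rule finite_measure_mono[OF V_mono]) auto

end

locale kpg = kp M N X AA for M :: "'w measure" and N and X :: "nat \<Rightarrow> 'w \<Rightarrow> 't::polish_space" and AA +
  fixes G :: "nat \<Rightarrow> 't set"
  assumes G_A: "\<And>i. G i \<in> AA"
    and G_sep: "\<And>s t. s \<noteq> t \<Longrightarrow> \<exists>i. (s \<in> G i) \<noteq> (t \<in> G i)"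
begin

definition W :: "nat \<Rightarrow> (nat \<Rightarrow> bool) set" where "W n = {w. \<forall>i\<ge>n. \<not> w i}"
definition cell :: "nat \<Rightarrow> 't \<Rightarrow> nat \<Rightarrow> bool" where "cell n t = (\<lambda>i. i < n \<and> t \<in> G i)"
definition Q :: "nat \<Rightarrow> (nat \<Rightarrow> bool) \<Rightarrow> 't set" where "Q n w = {t. cell n t = w}"

lemma finite_W: "finite (W n)"
proof -
  have "W n \<subseteq> (\<lambda>S i. i \<in> S) ` Pow {..<n}"
  proof
    fix w assume "w \<in> W n"
    then have "w = (\<lambda>i. i \<in> {i. w i})" "{i. w i} \<in> Pow {..<n}" unfolding W_def
      by (auto, meson not_le)
    then show "w \<in> (\<lambda>S i. i \<in> S) ` Pow {..<n}" by blast
  qed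
  then show ?thesis by (rule finite_subset) auto
qed

lemma cell_W: "cell n t \<in> W n" unfolding cell_def W_def by auto

lemma Q_A: "Q n w \<in> AA"
proof (induction n arbitrary: w)
  case 0
  have "Q 0 w = (if w = (\<lambda>_. False) then UNIV else {})" unfolding Q_def cell_def by auto
  then show ?case using A_top A_empty by simp
next
  case (Suc n)
  have "cell (Suc n) t = w \<longleftrightarrow> cell n t = w(n:=False) \<and> (t \<in> G n) = w n" for t
  proof
    assume "cell (Suc n) t = w"
    then have "\<And>i. w i = (i < Suc n \<and> t \<in> G i)" unfolding cell_def by auto
    then show "cell n t = w(n:=False) \<and> (t \<in> G n) = w n"
      unfolding cell_def fun_eq_iff by (simp add: less_Suc_eq)
  next
    assume a: "cell n t = w(n:=False) \<and> (t \<in> G n) = w n"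
    show "cell (Suc n) t = w" unfolding fun_eq_iff
    proof
      fix i
      show "cell (Suc n) t i = w i"
      proof (cases "i = n")
        case True then show ?thesis using a unfolding cell_def by simp
      next
        case False
        then have "cell n t i = w i" using a by (metis fun_upd_other)
        then show ?thesis using False unfolding cell_def by (simp add: less_Suc_eq)
      qed
    qed
  qed
  then have "Q (Suc n) w = Q n (w(n:=False)) \<inter> {t. (t \<in> G n) = w n}"
    unfolding Q_def by blast
  moreover have "{t. (t \<in> G n) = w n} \<in> AA"
  proof (cases "w n")
    case True then show ?thesis using G_A by simp
  next
    case False
    then have "{t. (t \<in> G n) = w n} = UNIV - G n" by auto
    then show ?thesis using G_A A_compl by simp
  qed
  ultimately show ?case using Suc A_Int by simp
qed

lemma Q_borel: "Q n w \<in> sets borel" using Q_A A_borel by auto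

lemma Q_disj: "disjoint_family_on (Q n) I" unfolding disjoint_family_on_def Q_def by auto

lemma Q_cover: "(\<Union>w\<in>W n. C \<inter> Q n w) = C" unfolding Q_def using cell_W by auto

lemma z_cells: assumes "C \<in> sets borel" shows "z C = (\<Prod>w\<in>W n. z (C \<inter> Q n w))"
proof -
  have "z (\<Union>w\<in>W n. C \<inter> Q n w) = (\<Prod>w\<in>W n. z (C \<inter> Q n w))"
    by (rule mult_fin[where A="Q n"]) (use finite_W Q_A Q_disj Q_borel assms in auto)
  then show ?thesis unfolding Q_cover .
qed

end

context kpg begin

definition hits :: "nat \<Rightarrow> 't set \<Rightarrow> 'w \<Rightarrow> (nat \<Rightarrow> bool) set" where
  "hits n C \<omega> = cell n ` (rset N X \<omega> \<inter> C)"

definition S :: "nat \<Rightarrow> 't set \<Rightarrow> 'w \<Rightarrow> nat" where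
  "S n C \<omega> = card (hits n C \<omega>)"

lemma hits_W: "hits n C \<omega> \<subseteq> W n" unfolding hits_def using cell_W by auto

lemma finite_hits: "finite (hits n C \<omega>)" using finite_subset[OF hits_W finite_W] .

lemma hits_alt: "hits n C \<omega> = {w \<in> W n. rset N X \<omega> \<inter> C \<inter> Q n w \<noteq> {}}"
  unfolding hits_def Q_def using cell_W by auto

lemma S_le: assumes "finite (rset N X \<omega> \<inter> C)" shows "S n C \<omega> \<le> card (rset N X \<omega> \<inter> C)"
  unfolding S_def hits_def using card_image_le[OF assms] .

definition idx :: "'t \<Rightarrow> 't \<Rightarrow> nat" where "idx s t = (SOME i. (s \<in> G i) \<noteq> (t \<in> G i))"

lemma idx: "s \<noteq> t \<Longrightarrow> (s \<in> G (idx s t)) \<noteq> (t \<in> G (idx s t))"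
  unfolding idx_def using G_sep by (rule someI_ex)

lemma cell_inj:
  assumes F: "finite F"
  shows "\<exists>n0. \<forall>n\<ge>n0. inj_on (cell n) F"
proof -
  define n0 where "n0 = Suc (Max (insert 0 ((\<lambda>(s,t). idx s t) ` (F \<times> F))))"
  have fin: "finite (insert 0 ((\<lambda>(s,t). idx s t) ` (F \<times> F)))" using F by auto
  show ?thesis
  proof (intro exI[of _ n0] allI impI)
    fix n assume n: "n0 \<le> n"
    show "inj_on (cell n) F"
    proof (rule inj_onI, rule ccontr)
      fix s t assume st: "s \<in> F" "t \<in> F" "cell n s = cell n t" "s \<noteq> t"
      have "idx s t \<in> insert 0 ((\<lambda>(s,t). idx s t) ` (F \<times> F))" using st by force
      then have "idx s t < n0" unfolding n0_def using Max_ge[OF fin] by (simp add: le_imp_less_Suc)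
      then have "idx s t < n" using n by simp
      then have "cell n s (idx s t) \<noteq> cell n t (idx s t)" unfolding cell_def using idx[OF st(4)] by simp
      then show False using st(3) by simp
    qed
  qed
qed

lemma S_ge:
  assumes F: "finite F" "F \<subseteq> rset N X \<omega> \<inter> C"
  shows "\<exists>n0. \<forall>n\<ge>n0. card F \<le> S n C \<omega>"
proof -
  obtain n0 where n0: "\<forall>n\<ge>n0. inj_on (cell n) F" using cell_inj[OF F(1)] by blast
  show ?thesis
  proof (intro exI[of _ n0] allI impI)
    fix n assume "n0 \<le> n"
    then have "card F = card (cell n ` F)" using n0 card_image by metis
    also have "\<dots> \<le> S n C \<omega>" unfolding S_def hits_def
      by (rule card_mono[OF _ image_mono[OF F(2)]]) (use finite_hits[of n C \<omega>] in \<open>simp add: hits_def\<close>)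
    finally show "card F \<le> S n C \<omega>" .
  qed
qed

lemma S_fin:
  assumes "finite (rset N X \<omega> \<inter> C)"
  shows "\<exists>n0. \<forall>n\<ge>n0. S n C \<omega> = card (rset N X \<omega> \<inter> C)"
  using S_ge[OF assms order_refl] S_le[OF assms] by (meson order_antisym)

lemma S_inf:
  assumes "infinite (rset N X \<omega> \<inter> C)"
  shows "\<exists>n0. \<forall>n\<ge>n0. k \<le> S n C \<omega>"
proof -
  obtain F where "finite F" "card F = k" "F \<subseteq> rset N X \<omega> \<inter> C"
    using infinite_arbitrarily_large[OF assms] by blast
  then show ?thesis using S_ge by metis
qed

lemma pcount_eq_enat:
  "pcount N X C \<omega> = enat k \<longleftrightarrow> (\<exists>n0. \<forall>n\<ge>n0. S n C \<omega> = k)"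
proof
  assume "pcount N X C \<omega> = enat k"
  then have "finite (C \<inter> rset N X \<omega>)" "card (C \<inter> rset N X \<omega>) = k"
    unfolding pcount_def by (auto split: if_splits)
  then show "\<exists>n0. \<forall>n\<ge>n0. S n C \<omega> = k" using S_fin[of \<omega> C] by (simp add: Int_commute)
next
  assume a: "\<exists>n0. \<forall>n\<ge>n0. S n C \<omega> = k"
  then obtain n0 where n0: "\<forall>n\<ge>n0. S n C \<omega> = k" by blast
  show "pcount N X C \<omega> = enat k"
  proof (cases "finite (rset N X \<omega> \<inter> C)")
    case True
    then obtain n1 where "\<forall>n\<ge>n1. S n C \<omega> = card (rset N X \<omega> \<inter> C)" using S_fin by blast
    then have "card (rset N X \<omega> \<inter> C) = k" using n0 by (metis max.cobounded1 max.cobounded2)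
    then show ?thesis using True unfolding pcount_def by (simp add: Int_commute)
  next
    case False
    then obtain n1 where "\<forall>n\<ge>n1. Suc k \<le> S n C \<omega>" using S_inf by blast
    then have "Suc k \<le> k" using n0 by (metis max.cobounded1 max.cobounded2)
    then show ?thesis by simp
  qed
qed

definition Sr :: "nat \<Rightarrow> 't set \<Rightarrow> 'w \<Rightarrow> real" where
  "Sr n C \<omega> = (\<Sum>w\<in>W n. indicator (space M - V (C \<inter> Q n w)) \<omega>)"

lemma Sr_S: assumes "\<omega> \<in> space M" shows "Sr n C \<omega> = real (S n C \<omega>)"
proof -
  have "hits n C \<omega> = {w \<in> W n. \<omega> \<in> space M - V (C \<inter> Q n w)}"
    unfolding hits_alt V_def using assms by auto
  then have "real (S n C \<omega>) = (\<Sum>w\<in>{w \<in> W n. \<omega> \<in> space M - V (C \<inter> Q n w)}. 1)"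
    unfolding S_def by simp
  also have "\<dots> = Sr n C \<omega>" unfolding Sr_def
    by (subst sum.inter_filter[OF finite_W]) (simp add: indicator_def of_bool_def)
  finally show ?thesis by simp
qed

lemma Sr_meas[measurable]: assumes [measurable]: "C \<in> sets borel" shows "Sr n C \<in> borel_measurable M"
proof -
  have [measurable]: "C \<inter> Q n w \<in> sets borel" for w using Q_borel by simp
  show ?thesis unfolding Sr_def by measurable
qed

lemma S_eq_sets: assumes [measurable]: "C \<in> sets borel"
  shows "{\<omega> \<in> space M. S n C \<omega> = k} \<in> sets M"
proof -
  have "{\<omega> \<in> space M. S n C \<omega> = k} = {\<omega> \<in> space M. Sr n C \<omega> = real k}"
    using Sr_S by auto
  also have "\<dots> \<in> sets M" by measurable
  finally show ?thesis .
qed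

lemma S_pred[measurable]: assumes "C \<in> sets borel"
  shows "Measurable.pred M (\<lambda>\<omega>. S n C \<omega> = k)"
  using S_eq_sets[OF assms] unfolding Measurable.pred_def .

lemma pcount_enat_sets: assumes [measurable]: "C \<in> sets borel"
  shows "{\<omega> \<in> space M. pcount N X C \<omega> = enat k} \<in> sets M"
proof -
  have "{\<omega> \<in> space M. pcount N X C \<omega> = enat k} = {\<omega> \<in> space M. \<exists>n0. \<forall>n\<ge>n0. S n C \<omega> = k}"
    using pcount_eq_enat by auto
  also have "\<dots> \<in> sets M" by measurable
  finally show ?thesis .
qed

lemma pcount_meas: assumes [measurable]: "C \<in> sets borel"
  shows "pcount N X C \<in> measurable M (count_space UNIV)"
proof -
  have c: "countable (UNIV :: enat set)" by simp
  show ?thesis unfolding measurable_count_space_eq_countable[OF c]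
  proof (intro conjI ballI)
    show "pcount N X C \<in> space M \<rightarrow> UNIV" by simp
  fix a :: enat
  show "pcount N X C -` {a} \<inter> space M \<in> sets M"
  proof (cases a)
    case (enat k)
    have "pcount N X C -` {a} \<inter> space M = {\<omega> \<in> space M. pcount N X C \<omega> = enat k}" using enat by auto
    then show ?thesis using pcount_enat_sets[OF assms] by simp
  next
    case infinity
    have "pcount N X C -` {a} \<inter> space M = space M - (\<Union>k. {\<omega> \<in> space M. pcount N X C \<omega> = enat k})"
    proof (intro equalityI subsetI)
      fix \<omega> assume "\<omega> \<in> space M - (\<Union>k. {\<omega> \<in> space M. pcount N X C \<omega> = enat k})"
      then show "\<omega> \<in> pcount N X C -` {a} \<inter> space M" using infinity by (cases "pcount N X C \<omega>") auto
    qed (use infinity in auto)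
    also have "\<dots> \<in> sets M" using pcount_enat_sets[OF assms] by auto
    finally show ?thesis .
  qed
  qed
qed

end

lemma powser_coeff_zero:
  fixes d :: "nat \<Rightarrow> real"
  assumes sums: "\<And>s. 0 < s \<Longrightarrow> s < 1 \<Longrightarrow> (\<lambda>i. d i * s^i) sums 0" and bd: "\<And>i. \<bar>d i\<bar> \<le> B"
  shows "d k = 0"
proof (induction k rule: less_induct)
  case (less k)
  have B0: "0 \<le> B" using bd[of 0] by simp
  have key: "\<bar>d k\<bar> \<le> B * s / (1 - s)" if s: "0 < s" "s < 1" for s
  proof -
    have "(\<lambda>i. d (i + k) * s^(i + k)) sums (0 - (\<Sum>i<k. d i * s^i))"
      using sums_iff_shift[of "\<lambda>i. d i * s^i" k "0 - (\<Sum>i<k. d i * s^i)"] sums[OF s] by simp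
    then have "(\<lambda>i. d (i + k) * s^(i + k)) sums 0" using less by simp
    then have "(\<lambda>i. d (i + k) * s^(i + k) / s^k) sums (0 / s^k)" by (rule sums_divide)
    moreover have "d (i + k) * s^(i + k) / s^k = d (i + k) * s^i" for i
      using s by (simp add: power_add)
    ultimately have "(\<lambda>i. d (i + k) * s^i) sums 0" by simp
    then have sh: "(\<lambda>i. d (i + 1 + k) * s^(i + 1)) sums (0 - d k)"
      using sums_iff_shift[of "\<lambda>i. d (i + k) * s^i" 1 "0 - d k"] by (simp add: add.commute add.left_commute)
    have geo: "(\<lambda>i. B * s * s^i) sums (B * s * (1 / (1 - s)))"
      by (rule sums_mult, rule geometric_sums) (use s in simp)
    have le: "norm (d (i + 1 + k) * s^(i + 1)) \<le> B * s * s^i" for i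
    proof -
      have "norm (d (i + 1 + k) * s^(i + 1)) = \<bar>d (i + 1 + k)\<bar> * s^(i+1)" using s by (simp add: abs_mult)
      also have "\<dots> \<le> B * s^(i+1)" by (rule mult_right_mono[OF bd]) (use s in simp)
      finally show ?thesis by (simp add: mult.assoc)
    qed
    have sn: "summable (\<lambda>i. norm (d (i + 1 + k) * s^(i + 1)))"
      by (rule summable_comparison_test[OF _ sums_summable[OF geo]]) (use le in auto)
    have "\<bar>d k\<bar> = norm (suminf (\<lambda>i. d (i + 1 + k) * s^(i + 1)))"
      using sums_unique[OF sh] by simp
    also have "\<dots> \<le> (\<Sum>i. norm (d (i + 1 + k) * s^(i + 1)))" by (rule summable_norm[OF sn])
    also have "\<dots> \<le> (\<Sum>i. B * s * s^i)" by (rule suminf_le[OF le sn sums_summable[OF geo]])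
    also have "\<dots> = B * s / (1 - s)" using sums_unique[OF geo] by simp
    finally show ?thesis .
  qed
  show ?case
  proof (rule ccontr)
    assume dk: "d k \<noteq> 0"
    define s where "s = min (1/2) (\<bar>d k\<bar> / (4 * (B + 1)))"
    have s0: "0 < s" unfolding s_def using dk B0 by simp
    have s1: "s \<le> 1/2" unfolding s_def by (rule min.cobounded1)
    have s2: "s \<le> \<bar>d k\<bar> / (4 * (B + 1))" unfolding s_def by (rule min.cobounded2)
    have "s < 1" using s1 by linarith
    then have "\<bar>d k\<bar> \<le> B * s / (1 - s)" using key[OF s0] by blast
    also have "\<dots> \<le> 2 * B * s"
    proof -
      have "1 \<le> 2 * (1 - s)" using s1 by simp
      then have "B * s * 1 \<le> B * s * (2 * (1 - s))" by (rule mult_left_mono) (use B0 s0 in simp)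
      then have "B * s \<le> 2 * B * s * (1 - s)" by (simp add: algebra_simps)
      then show ?thesis using s1 by (simp add: divide_le_eq)
    qed
    also have "\<dots> \<le> 2 * B * (\<bar>d k\<bar> / (4 * (B + 1)))" using mult_left_mono[OF s2, of "2*B"] B0 by simp
    also have "\<dots> < \<bar>d k\<bar>"
    proof -
      have "2 * B < 4 * (B + 1)" using B0 by simp
      then have "2 * B / (4 * (B + 1)) < 1" using B0 by simp
      then have "2 * B / (4 * (B + 1)) * \<bar>d k\<bar> < 1 * \<bar>d k\<bar>" using dk by (intro mult_strict_right_mono) auto
      then show ?thesis by simp
    qed
    finally show False by simp
  qed
qed

lemma ln_diff_bound:
  fixes p t :: real
  assumes p: "0 \<le> p" "p \<le> 1/2" and t: "0 \<le> t" "t \<le> 1"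
  shows "\<bar>ln (1 - p * t) - t * ln (1 - p)\<bar> \<le> 2 * p^2"
proof -
  have ptp: "p * t \<le> p" using mult_left_mono[of t 1 p] p t by simp
  then have pt: "0 \<le> p * t" "p * t \<le> 1/2" using p t by auto
  have a1: "ln (1 - p * t) \<le> - (p * t)" using ln_one_minus_pos_upper_bound[of "p*t"] pt by simp
  have a2: "- (p*t) - 2 * (p*t)^2 \<le> ln (1 - p * t)" using ln_one_minus_pos_lower_bound[of "p*t"] pt by simp
  have b1: "ln (1 - p) \<le> - p" using ln_one_minus_pos_upper_bound[of p] p by simp
  have b2: "- p - 2 * p^2 \<le> ln (1 - p)" using ln_one_minus_pos_lower_bound[of p] p by simp
  have c1: "t * ln (1 - p) \<le> - t * p" using mult_left_mono[OF b1 t(1)] by simp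
  have c2: "t * (- p - 2 * p^2) \<le> t * ln (1 - p)" using mult_left_mono[OF b2 t(1)] .
  have d1: "(p*t)^2 \<le> p^2" using power_mono[OF ptp, of 2] pt by simp
  have d2: "t * p^2 \<le> p^2" using t by (simp add: mult_left_le_one_le)
  show ?thesis using a1 a2 c1 c2 d1 d2 by (simp add: abs_le_iff algebra_simps)
qed

lemma (in prob_space) expect_prod_indep:
  fixes a b :: real
  assumes I: "finite I" and E: "\<And>i. i \<in> I \<Longrightarrow> E i \<in> events"
    and indep: "\<And>J. J \<subseteq> I \<Longrightarrow> prob (space M \<inter> (\<Inter>i\<in>J. E i)) = (\<Prod>i\<in>J. prob (E i))"
  shows "expectation (\<lambda>\<omega>. \<Prod>i\<in>I. (b * indicator (E i) \<omega> + a)) = (\<Prod>i\<in>I. (b * prob (E i) + a))"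
proof -
  have ev: "space M \<inter> (\<Inter>i\<in>J. E i) \<in> events" if "J \<subseteq> I" for J
  proof (cases "J = {}")
    case True then show ?thesis by simp
  next
    case False
    then have "space M \<inter> (\<Inter>i\<in>J. E i) = (\<Inter>i\<in>J. E i)" using E that sets.sets_into_space by blast
    then show ?thesis using False E that finite_subset[OF that I] by (auto intro!: sets.finite_INT)
  qed
  have pw: "(\<Prod>i\<in>I. (b * indicator (E i) \<omega> + a)) =
      (\<Sum>J\<in>Pow I. b ^ card J * indicator (space M \<inter> (\<Inter>i\<in>J. E i)) \<omega> * a ^ card (I - J))"
    if \<omega>: "\<omega> \<in> space M" for \<omega>
  proof -
    have "(\<Prod>i\<in>I. (b * indicator (E i) \<omega> + a)) = (\<Sum>J\<in>Pow I. (\<Prod>i\<in>J. b * indicator (E i) \<omega>) * (\<Prod>i\<in>I - J. a))"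
      by (rule prod_add[OF I])
    also have "\<dots> = (\<Sum>J\<in>Pow I. b ^ card J * indicator (space M \<inter> (\<Inter>i\<in>J. E i)) \<omega> * a ^ card (I - J))"
    proof (rule sum.cong[OF refl])
      fix J assume J: "J \<in> Pow I"
      have "(\<Prod>i\<in>J. b * indicator (E i) \<omega>) = b ^ card J * (\<Prod>i\<in>J. indicator (E i) \<omega>)"
        by (simp add: prod.distrib)
      moreover have "(\<Prod>i\<in>J. indicator (E i) \<omega> :: real) = indicator (space M \<inter> (\<Inter>i\<in>J. E i)) \<omega>"
      proof (cases "\<forall>i\<in>J. \<omega> \<in> E i")
        case True then show ?thesis using \<omega> by (simp add: indicator_def)
      next
        case False
        then obtain i where i: "i \<in> J" "\<omega> \<notin> E i" by blast
        have "(\<Prod>i\<in>J. indicator (E i) \<omega> :: real) = 0"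
          using i finite_subset[of J I] J I by (intro prod_zero) (auto simp: indicator_def)
        then show ?thesis using i by (auto simp: indicator_def)
      qed
      ultimately show "(\<Prod>i\<in>J. b * indicator (E i) \<omega>) * (\<Prod>i\<in>I - J. a) =
          b ^ card J * indicator (space M \<inter> (\<Inter>i\<in>J. E i)) \<omega> * a ^ card (I - J)" by simp
    qed
    finally show ?thesis .
  qed
  have "expectation (\<lambda>\<omega>. \<Prod>i\<in>I. (b * indicator (E i) \<omega> + a)) =
      expectation (\<lambda>\<omega>. \<Sum>J\<in>Pow I. b ^ card J * indicator (space M \<inter> (\<Inter>i\<in>J. E i)) \<omega> * a ^ card (I - J))"
    by (rule Bochner_Integration.integral_cong[OF refl pw])
  also have "\<dots> = (\<Sum>J\<in>Pow I. expectation (\<lambda>\<omega>. b ^ card J * indicator (space M \<inter> (\<Inter>i\<in>J. E i)) \<omega> * a ^ card (I - J)))"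
    by (rule Bochner_Integration.integral_sum) (use ev in \<open>auto intro!: integrable_real_indicator simp: less_top[symmetric]\<close>)
  also have "\<dots> = (\<Sum>J\<in>Pow I. b ^ card J * prob (space M \<inter> (\<Inter>i\<in>J. E i)) * a ^ card (I - J))"
  proof (rule sum.cong[OF refl])
    fix J assume "J \<in> Pow I"
    then have e: "space M \<inter> (\<Inter>i\<in>J. E i) \<in> events" using ev by auto
    have "expectation (indicator (space M \<inter> (\<Inter>i\<in>J. E i)) :: 'a \<Rightarrow> real) = prob (space M \<inter> (\<Inter>i\<in>J. E i))"
      using e by (simp add: emeasure_eq_measure)
    then show "expectation (\<lambda>\<omega>. b ^ card J * indicator (space M \<inter> (\<Inter>i\<in>J. E i)) \<omega> * a ^ card (I - J)) =
        b ^ card J * prob (space M \<inter> (\<Inter>i\<in>J. E i)) * a ^ card (I - J)"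
      by (simp add: integral_mult_left_zero integral_mult_right_zero)
  qed
  also have "\<dots> = (\<Sum>J\<in>Pow I. (\<Prod>i\<in>J. b * prob (E i)) * (\<Prod>i\<in>I - J. a))"
    by (rule sum.cong[OF refl]) (simp add: indep prod.distrib)
  also have "\<dots> = (\<Prod>i\<in>I. (b * prob (E i) + a))" by (rule prod_add[OF I, symmetric])
  finally show ?thesis .
qed

primrec branch :: "(nat \<Rightarrow> (nat \<Rightarrow> bool) \<Rightarrow> bool) \<Rightarrow> nat \<Rightarrow> (nat \<Rightarrow> bool)" where
  "branch g 0 = (\<lambda>_. False)"
| "branch g (Suc n) = (if g (Suc n) ((branch g n)(n:=True)) then (branch g n)(n:=True) else branch g n)"

context kp begin

lemma V_Un: "V (C \<union> D) = V C \<inter> V D" unfolding V_def by auto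

lemma noatom_V: "prob (space M - V {t}) = 0"
proof -
  have "space M - V {t} = {\<omega> \<in> space M. t \<in> rset N X \<omega>}" unfolding V_def by auto
  then show ?thesis using noatom by simp
qed

lemma z_point:
  assumes D: "D \<in> sets borel" and E: "E \<subseteq> {t}"
  shows "z (D \<union> E) = z D"
proof -
  have "E = {} \<or> E = {t}" using E by blast
  then have Eb: "E \<in> sets borel" by (metis closed_singleton borel_closed sets.empty_sets)
  have DE: "D \<union> E \<in> sets borel" using D Eb by simp
  have sub: "V (D \<union> E) \<subseteq> V D" by (rule V_mono) simp
  have sub2: "V D - V (D \<union> E) \<subseteq> space M - V {t}" using E unfolding V_def by blast
  have e1: "prob (V D - V (D \<union> E)) = prob (V D) - prob (V (D \<union> E))"
    by (rule finite_measure_Diff) (use D DE sub in auto)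
  have e2: "prob (V D - V (D \<union> E)) \<le> prob (space M - V {t})"
    by (rule finite_measure_mono[OF sub2]) simp
  have e3: "prob (V (D \<union> E)) \<le> prob (V D)" using D by (intro finite_measure_mono[OF sub]) simp
  show ?thesis unfolding z_def using e1 e2 e3 noatom_V[of t] by simp
qed

lemma z_cont_below:
  assumes D: "\<And>m. D m \<in> sets borel" and inc: "incseq D"
  shows "(\<lambda>m. z (D m)) \<longlonglongrightarrow> z (\<Union>m. D m)"
proof -
  have "(\<lambda>m. prob (V (D m))) \<longlonglongrightarrow> prob (\<Inter>m. V (D m))"
  proof (rule finite_Lim_measure_decseq)
    show "range (\<lambda>m. V (D m)) \<subseteq> events" using D by auto
    show "decseq (\<lambda>m. V (D m))" unfolding decseq_def
    proof (intro allI impI)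
      fix m n :: nat assume "m \<le> n"
      then have "D m \<subseteq> D n" using inc by (simp add: incseq_def)
      then show "V (D n) \<subseteq> V (D m)" by (rule V_mono)
    qed
  qed
  moreover have "(\<Inter>m. V (D m)) = V (\<Union>m. D m)" unfolding V_def by auto
  ultimately show ?thesis unfolding z_def by simp
qed

lemma mult2:
  assumes "A1 \<in> AA" "A2 \<in> AA" "A1 \<inter> A2 = {}" "D1 \<in> sets borel" "D2 \<in> sets borel" "D1 \<subseteq> A1" "D2 \<subseteq> A2"
  shows "z (D1 \<union> D2) = z D1 * z D2"
proof -
  have "z (\<Union>i<(2::nat). (\<lambda>i. if i = 0 then D1 else D2) i) = (\<Prod>i<(2::nat). z ((\<lambda>i. if i = 0 then D1 else D2) i))"
  proof (rule mult[where A="\<lambda>i. if i = 0 then A1 else A2"])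
    show "disjoint_family_on (\<lambda>i. if i = 0 then A1 else A2) {..<(2::nat)}"
      using assms(3) unfolding disjoint_family_on_def by (auto simp: Int_commute)
  qed (use assms in auto)
  moreover have "(\<Union>i<(2::nat). (\<lambda>i. if i = 0 then D1 else D2) i) = D1 \<union> D2"
    by (auto simp: numeral_2_eq_2 lessThan_Suc)
  ultimately show ?thesis by (simp add: numeral_2_eq_2 lessThan_Suc)
qed

end

context kpg begin

definition trunc :: "nat \<Rightarrow> (nat \<Rightarrow> bool) \<Rightarrow> nat \<Rightarrow> bool" where "trunc n w = (\<lambda>i. i < n \<and> w i)"

lemma trunc_W: "trunc n w \<in> W n" unfolding trunc_def W_def by auto
lemma trunc_id: assumes "w \<in> W n" shows "trunc n w = w"
proof (rule ext)
  fix i show "trunc n w i = w i" using assms unfolding trunc_def W_def by (cases "i < n") auto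
qed
lemma trunc_trunc: "n \<le> m \<Longrightarrow> trunc n (trunc m w) = trunc n w" unfolding trunc_def by auto
lemma cell_trunc: "n \<le> m \<Longrightarrow> trunc n (cell m t) = cell n t" unfolding trunc_def cell_def by auto
lemma Q_sub: "n \<le> m \<Longrightarrow> Q m w \<subseteq> Q n (trunc n w)" unfolding Q_def using cell_trunc by auto

lemma Q0: "Q 0 (\<lambda>_. False) = UNIV" unfolding Q_def cell_def by auto

lemma caseA:
  assumes C: "C \<in> sets borel" and eps: "\<epsilon> > 0" and bad: "\<forall>n. \<exists>w\<in>W n. z (C \<inter> Q n w) \<le> 1 - \<epsilon>"
  shows "z C = 0 \<and> (AE \<omega> in M. pcount N X C \<omega> = \<infinity>)"
proof -
  define Bd where "Bd n = {w \<in> W n. z (C \<inter> Q n w) \<le> 1 - \<epsilon>}" for n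
  have Bd_ne: "\<exists>w. w \<in> Bd n" for n using bad unfolding Bd_def by blast
  have par: "trunc n w \<in> Bd n" if "w \<in> Bd m" "n \<le> m" for n m w
  proof -
    have "z (C \<inter> Q n (trunc n w)) \<le> z (C \<inter> Q m w)"
      using Q_sub[OF that(2), of w] C Q_borel by (intro z_mono) auto
    then show ?thesis using that trunc_W unfolding Bd_def by auto
  qed
  define good where "good n w \<longleftrightarrow> w \<in> W n \<and> (\<forall>m\<ge>n. \<exists>w'\<in>Bd m. trunc n w' = w)" for n w
  have good0: "good 0 (\<lambda>_. False)"
    unfolding good_def W_def trunc_def using Bd_ne by auto
  have step: "good (Suc n) (w(n:=True)) \<or> good (Suc n) w" if g: "good n w" for n w
  proof (rule ccontr)
    assume na: "\<not> (good (Suc n) (w(n:=True)) \<or> good (Suc n) w)"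
    have wW: "w \<in> W n" using g unfolding good_def by auto
    have W1: "w(n:=True) \<in> W (Suc n)" "w \<in> W (Suc n)" using wW unfolding W_def by auto
    obtain m1 where m1: "m1 \<ge> Suc n" "\<forall>w'\<in>Bd m1. trunc (Suc n) w' \<noteq> w(n:=True)"
      using na W1 unfolding good_def by auto
    obtain m2 where m2: "m2 \<ge> Suc n" "\<forall>w'\<in>Bd m2. trunc (Suc n) w' \<noteq> w"
      using na W1 unfolding good_def by auto
    define m where "m = max m1 m2"
    have nm: "n \<le> m" using m1(1) unfolding m_def by simp
    obtain w' where w': "w' \<in> Bd m" "trunc n w' = w"
      using g nm unfolding good_def by blast
    have "trunc (Suc n) w' = w(n:=True) \<or> trunc (Suc n) w' = w"
    proof (cases "w' n")
      case True
      then show ?thesis using w'(2) wW unfolding trunc_def W_def by (auto simp: fun_eq_iff less_Suc_eq)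
    next
      case False
      then show ?thesis using w'(2) wW unfolding trunc_def W_def by (auto simp: fun_eq_iff less_Suc_eq)
    qed
    then show False
    proof
      assume a: "trunc (Suc n) w' = w(n:=True)"
      have "trunc m1 w' \<in> Bd m1" using par[OF w'(1)] unfolding m_def by simp
      moreover have "trunc (Suc n) (trunc m1 w') = w(n:=True)" using a m1(1) by (simp add: trunc_trunc)
      ultimately show False using m1(2) by blast
    next
      assume a: "trunc (Suc n) w' = w"
      have "trunc m2 w' \<in> Bd m2" using par[OF w'(1)] unfolding m_def by simp
      moreover have "trunc (Suc n) (trunc m2 w') = w" using a m2(1) by (simp add: trunc_trunc)
      ultimately show False using m2(2) by blast
    qed
  qed
  define br where "br = branch good"
  have gbr: "good n (br n)" for n
  proof (induction n)
    case 0 then show ?case using good0 unfolding br_def by simp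
  next
    case (Suc n)
    then show ?case using step[OF Suc] unfolding br_def by auto
  qed
  have brBd: "br n \<in> Bd n" for n
  proof -
    obtain w' where "w' \<in> Bd n" "trunc n w' = br n" using gbr[of n] unfolding good_def by auto
    then show ?thesis using trunc_id[of w' n] unfolding Bd_def by auto
  qed
  have brW: "br n \<in> W n" for n using brBd unfolding Bd_def by auto
  have trSuc: "trunc n (br (Suc n)) = br n" for n
  proof -
    have "br (Suc n) = br n \<or> br (Suc n) = (br n)(n:=True)" unfolding br_def by auto
    then show ?thesis using trunc_id[OF brW[of n]] unfolding trunc_def by (auto simp: fun_eq_iff)
  qed
  define A where "A n = Q n (br n)" for n
  have A_dec: "decseq A"
  proof (rule decseq_SucI)
    fix n show "A (Suc n) \<subseteq> A n" unfolding A_def using Q_sub[of n "Suc n" "br (Suc n)"] trSuc by simp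
  qed
  have A_AA: "A n \<in> AA" for n unfolding A_def by (rule Q_A)
  have A_b: "A n \<in> sets borel" for n unfolding A_def by (rule Q_borel)
  have A_z: "z (C \<inter> A n) \<le> 1 - \<epsilon>" for n using brBd[of n] unfolding Bd_def A_def by auto
  define Iinf where "Iinf = (\<Inter>n. A n)"
  have Iinf1: "s = t" if "s \<in> Iinf" "t \<in> Iinf" for s t
  proof (rule ccontr)
    assume st: "s \<noteq> t"
    define i where "i = idx s t"
    have "s \<in> A (Suc i)" "t \<in> A (Suc i)" using that unfolding Iinf_def by auto
    then have "cell (Suc i) s = cell (Suc i) t" unfolding A_def Q_def by simp
    then show False using idx[OF st] unfolding cell_def i_def[symmetric] by (metis lessI)
  qed
  have "\<exists>t0. Iinf \<subseteq> {t0}"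
  proof (cases "Iinf = {}")
    case False
    then obtain t where "t \<in> Iinf" by blast
    then show ?thesis using Iinf1 by blast
  qed simp
  then obtain t0 where t0: "Iinf \<subseteq> {t0}" by blast
  have Iinf_b: "Iinf \<in> sets borel" unfolding Iinf_def using A_b by auto
  have zero: "z (C \<inter> A n) = 0" for n
  proof (rule ccontr)
    assume "z (C \<inter> A n) \<noteq> 0"
    then have a0: "z (C \<inter> A n) > 0" using z_nonneg[of "C \<inter> A n"] by simp
    define a where "a = z (C \<inter> A n)"
    have fact: "z (C \<inter> A n) = z (C \<inter> (A n - A (n + m))) * z (C \<inter> A (n + m))" for m
    proof -
      have sub: "A (n + m) \<subseteq> A n" using A_dec unfolding decseq_def by simp
      have "C \<inter> A n = C \<inter> (A n - A (n + m)) \<union> C \<inter> A (n + m)" using sub by blast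
      moreover have "z (C \<inter> (A n - A (n + m)) \<union> C \<inter> A (n + m)) = z (C \<inter> (A n - A (n + m))) * z (C \<inter> A (n + m))"
        by (rule mult2[of "A n - A (n + m)" "A (n + m)"]) (use A_AA A_Diff A_b C in auto)
      ultimately show ?thesis by simp
    qed
    have lim: "(\<lambda>m. z (C \<inter> (A n - A (n + m)))) \<longlonglongrightarrow> z (\<Union>m. C \<inter> (A n - A (n + m)))"
    proof (rule z_cont_below)
      show "C \<inter> (A n - A (n + m)) \<in> sets borel" for m using C A_b by auto
      show "incseq (\<lambda>m. C \<inter> (A n - A (n + m)))" unfolding incseq_def
      proof (intro allI impI)
        fix m1 m2 :: nat assume "m1 \<le> m2"
        then have "A (n + m2) \<subseteq> A (n + m1)" using A_dec unfolding decseq_def by simp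
        then show "C \<inter> (A n - A (n + m1)) \<subseteq> C \<inter> (A n - A (n + m2))" by blast
      qed
    qed
    have U: "(\<Union>m. C \<inter> (A n - A (n + m))) = C \<inter> A n - Iinf"
    proof
      show "(\<Union>m. C \<inter> (A n - A (n + m))) \<subseteq> C \<inter> A n - Iinf" unfolding Iinf_def by auto
      show "C \<inter> A n - Iinf \<subseteq> (\<Union>m. C \<inter> (A n - A (n + m)))"
      proof
        fix x assume x: "x \<in> C \<inter> A n - Iinf"
        then obtain k where k: "x \<notin> A k" unfolding Iinf_def by auto
        have "x \<notin> A (n + k)" using k A_dec unfolding decseq_def by (metis le_add2 subsetD)
        then show "x \<in> (\<Union>m. C \<inter> (A n - A (n + m)))" using x by auto
      qed
    qed
    have "z (C \<inter> A n - Iinf) = z (C \<inter> A n)"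
    proof -
      have "z ((C \<inter> A n - Iinf) \<union> (C \<inter> A n \<inter> Iinf)) = z (C \<inter> A n - Iinf)"
        by (rule z_point[where t=t0]) (use C A_b Iinf_b t0 in auto)
      moreover have "(C \<inter> A n - Iinf) \<union> (C \<inter> A n \<inter> Iinf) = C \<inter> A n" by blast
      ultimately show ?thesis by simp
    qed
    then have lim2: "(\<lambda>m. z (C \<inter> (A n - A (n + m)))) \<longlonglongrightarrow> a" using lim U unfolding a_def by simp
    have "a < a / (1 - \<epsilon>)"
    proof -
      have e1: "1 - \<epsilon> < 1" "0 < 1 - \<epsilon>" using eps A_z[of n] a0 z_le1[of "C \<inter> A n"] unfolding a_def by linarith+
      then show ?thesis using a0 unfolding a_def by (simp add: less_divide_eq)
    qed
    then have "eventually (\<lambda>m. z (C \<inter> (A n - A (n + m))) < a / (1 - \<epsilon>)) sequentially"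
      using order_tendstoD(2)[OF lim2] by blast
    then obtain m0 where "\<forall>m\<ge>m0. z (C \<inter> (A n - A (n + m))) < a / (1 - \<epsilon>)"
      unfolding eventually_sequentially by blast
    then obtain m where m: "z (C \<inter> (A n - A (n + m))) < a / (1 - \<epsilon>)" by blast
    have e1: "0 < 1 - \<epsilon>" using eps A_z[of n] a0 z_le1[of "C \<inter> A n"] unfolding a_def by linarith
    have "a = z (C \<inter> (A n - A (n + m))) * z (C \<inter> A (n + m))" using fact unfolding a_def by simp
    also have "\<dots> \<le> z (C \<inter> (A n - A (n + m))) * (1 - \<epsilon>)"
      by (rule mult_left_mono[OF A_z z_nonneg])
    also have "\<dots> < a / (1 - \<epsilon>) * (1 - \<epsilon>)" by (rule mult_strict_right_mono[OF m e1])
    also have "\<dots> = a" using e1 by simp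
    finally show False by simp
  qed
  have zC: "z C = 0" using zero[of 0] unfolding A_def by (simp add: Q0 br_def)
  have ae1: "AE \<omega> in M. \<forall>n. \<omega> \<notin> V (C \<inter> A n)"
    unfolding AE_all_countable
  proof
    fix n show "AE \<omega> in M. \<omega> \<notin> V (C \<inter> A n)"
      using zero[of n] prob_eq_0[of "V (C \<inter> A n)"] C A_b unfolding z_def by auto
  qed
  have ae2: "AE \<omega> in M. \<omega> \<in> V {t0}"
    using noatom_V[of t0] prob_eq_0[of "space M - V {t0}"] by (auto elim: eventually_mono)
  have "AE \<omega> in M. pcount N X C \<omega> = \<infinity>"
    using ae1 ae2
  proof eventually_elim
    case (elim \<omega>)
    define Y where "Y = rset N X \<omega> \<inter> C"
    have \<omega>: "\<omega> \<in> space M" using elim(2) unfolding V_def by auto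
    have hit: "Y \<inter> A n \<noteq> {}" for n using elim(1) \<omega> unfolding V_def Y_def by auto
    have noI: "Y \<inter> Iinf = {}" using elim(2) t0 unfolding V_def Y_def by auto
    have "infinite Y"
    proof
      assume fY: "finite Y"
      have "\<forall>y\<in>Y. \<exists>k. y \<notin> A k" using noI unfolding Iinf_def by auto
      then obtain kk where kk: "\<And>y. y \<in> Y \<Longrightarrow> y \<notin> A (kk y)" by metis
      define K where "K = Max (insert 0 (kk ` Y))"
      have "Y \<inter> A K = {}"
      proof (rule ccontr)
        assume "Y \<inter> A K \<noteq> {}"
        then obtain y where y: "y \<in> Y" "y \<in> A K" by auto
        have "kk y \<le> K" unfolding K_def using fY y by (intro Max_ge) auto
        then have "A K \<subseteq> A (kk y)" using A_dec unfolding decseq_def by simp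
        then show False using kk[OF y(1)] y(2) by auto
      qed
      then show False using hit by simp
    qed
    then show ?case unfolding pcount_def Y_def by (simp add: Int_commute)
  qed
  then show ?thesis using zC by simp
qed

end

context kpg begin

definition gs :: "real \<Rightarrow> enat \<Rightarrow> real" where "gs s e = (case e of enat k \<Rightarrow> s ^ k | \<infinity> \<Rightarrow> 0)"

lemma S_meas: assumes C: "C \<in> sets borel" shows "S n C \<in> measurable M (count_space UNIV)"
proof -
  have c: "countable (UNIV :: nat set)" by simp
  show ?thesis unfolding measurable_count_space_eq_countable[OF c]
  proof (intro conjI ballI)
    fix k :: nat
    have "S n C -` {k} \<inter> space M = {\<omega> \<in> space M. S n C \<omega> = k}" by auto
    then show "S n C -` {k} \<inter> space M \<in> sets M" using S_eq_sets[OF C] by simp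
  qed simp
qed

lemma powS_meas: fixes s :: real assumes C: "C \<in> sets borel" shows "(\<lambda>\<omega>. s ^ S n C \<omega>) \<in> borel_measurable M"
proof -
  have "(\<lambda>k::nat. s ^ k) \<in> measurable (count_space UNIV) borel" by simp
  from measurable_compose[OF S_meas[OF C] this] show ?thesis .
qed

lemma gs_meas: assumes C: "C \<in> sets borel" shows "(\<lambda>\<omega>. gs s (pcount N X C \<omega>)) \<in> borel_measurable M"
proof -
  have "gs s \<in> measurable (count_space UNIV) borel" by simp
  from measurable_compose[OF pcount_meas[OF C] this] show ?thesis .
qed

lemma S_prod:
  fixes s :: real
  assumes \<omega>: "\<omega> \<in> space M"
  shows "s ^ S n C \<omega> = (\<Prod>w\<in>W n. (1 - s) * indicator (V (C \<inter> Q n w)) \<omega> + s)"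
proof -
  have H: "hits n C \<omega> = {w \<in> W n. \<omega> \<notin> V (C \<inter> Q n w)}"
    unfolding hits_alt V_def using \<omega> by auto
  have "(\<Prod>w\<in>W n. (1 - s) * indicator (V (C \<inter> Q n w)) \<omega> + s) = (\<Prod>w\<in>W n. if \<omega> \<notin> V (C \<inter> Q n w) then s else 1)"
    by (rule prod.cong) (auto simp: indicator_def)
  also have "\<dots> = (\<Prod>w\<in>{w \<in> W n. \<omega> \<notin> V (C \<inter> Q n w)}. s)"
    by (rule prod.inter_filter[OF finite_W, symmetric])
  also have "\<dots> = s ^ S n C \<omega>" unfolding S_def H by simp
  finally show ?thesis by simp
qed

lemma GF_n:
  fixes s :: real
  assumes C: "C \<in> sets borel"
  shows "expectation (\<lambda>\<omega>. s ^ S n C \<omega>) = (\<Prod>w\<in>W n. (1 - s) * z (C \<inter> Q n w) + s)"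
proof -
  have "expectation (\<lambda>\<omega>. s ^ S n C \<omega>) = expectation (\<lambda>\<omega>. \<Prod>w\<in>W n. (1 - s) * indicator (V (C \<inter> Q n w)) \<omega> + s)"
    by (rule Bochner_Integration.integral_cong[OF refl S_prod])
  also have "\<dots> = (\<Prod>w\<in>W n. (1 - s) * prob (V (C \<inter> Q n w)) + s)"
  proof (rule expect_prod_indep[OF finite_W])
    show "V (C \<inter> Q n w) \<in> events" for w using C Q_borel by auto
    fix J assume J: "J \<subseteq> W n"
    have "space M \<inter> (\<Inter>w\<in>J. V (C \<inter> Q n w)) = V (\<Union>w\<in>J. C \<inter> Q n w)" unfolding V_def by auto
    moreover have "z (\<Union>w\<in>J. C \<inter> Q n w) = (\<Prod>w\<in>J. z (C \<inter> Q n w))"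
      by (rule mult_fin[where A="Q n"]) (use finite_subset[OF J finite_W] Q_A Q_disj Q_borel C in auto)
    ultimately show "prob (space M \<inter> (\<Inter>w\<in>J. V (C \<inter> Q n w))) = (\<Prod>w\<in>J. prob (V (C \<inter> Q n w)))"
      unfolding z_def by simp
  qed
  finally show ?thesis unfolding z_def .
qed

lemma GF_lim:
  assumes C: "C \<in> sets borel" and s: "0 \<le> s" "s < 1"
  shows "(\<lambda>n. expectation (\<lambda>\<omega>. s ^ S n C \<omega>)) \<longlonglongrightarrow> expectation (\<lambda>\<omega>. gs s (pcount N X C \<omega>))"
proof (rule integral_dominated_convergence[where w="\<lambda>_. 1"])
  show "(\<lambda>\<omega>. gs s (pcount N X C \<omega>)) \<in> borel_measurable M" by (rule gs_meas[OF C])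
  show "(\<lambda>\<omega>. s ^ S n C \<omega>) \<in> borel_measurable M" for n by (rule powS_meas[OF C])
  show "integrable M (\<lambda>_. 1::real)" by simp
  show "AE \<omega> in M. norm (s ^ S n C \<omega>) \<le> 1" for n using s by (simp add: power_le_one)
  show "AE \<omega> in M. (\<lambda>n. s ^ S n C \<omega>) \<longlonglongrightarrow> gs s (pcount N X C \<omega>)"
  proof (rule AE_I2)
    fix \<omega> assume "\<omega> \<in> space M"
    show "(\<lambda>n. s ^ S n C \<omega>) \<longlonglongrightarrow> gs s (pcount N X C \<omega>)"
    proof (cases "finite (rset N X \<omega> \<inter> C)")
      case True
      obtain n0 where n0: "\<forall>n\<ge>n0. S n C \<omega> = card (rset N X \<omega> \<inter> C)" using S_fin[OF True] by blast
      have "gs s (pcount N X C \<omega>) = s ^ card (rset N X \<omega> \<inter> C)"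
        using True unfolding gs_def pcount_def by (simp add: Int_commute)
      moreover have "eventually (\<lambda>n. s ^ S n C \<omega> = s ^ card (rset N X \<omega> \<inter> C)) sequentially"
        unfolding eventually_sequentially using n0 by (intro exI[of _ n0]) simp
      ultimately show ?thesis by (simp add: tendsto_eventually)
    next
      case False
      have "gs s (pcount N X C \<omega>) = 0"
        using False unfolding gs_def pcount_def by (simp add: Int_commute)
      moreover have "filterlim (\<lambda>n. S n C \<omega>) at_top sequentially"
        unfolding filterlim_at_top eventually_sequentially using S_inf[OF False] by blast
      moreover have "(\<lambda>k. s ^ k) \<longlonglongrightarrow> 0" using s by (intro LIMSEQ_power_zero) simp
      ultimately show ?thesis using filterlim_compose[of "\<lambda>k. s ^ k" "nhds 0" sequentially "\<lambda>n. S n C \<omega>"] by simp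
    qed
  qed
qed

end

context kpg begin

lemma zcell_pos:
  assumes C: "C \<in> sets borel" and zC: "0 < z C" and w: "w \<in> W n"
  shows "0 < z (C \<inter> Q n w)"
proof (rule ccontr)
  assume "\<not> 0 < z (C \<inter> Q n w)"
  then have "z (C \<inter> Q n w) = 0" using z_nonneg[of "C \<inter> Q n w"] by simp
  then have "(\<Prod>w\<in>W n. z (C \<inter> Q n w)) = 0" using w finite_W by (intro prod_zero) auto
  then show False using z_cells[OF C, of n] zC by simp
qed

lemma prod_lim:
  assumes C: "C \<in> sets borel" and small: "\<forall>\<epsilon>>0. \<exists>n0. \<forall>n\<ge>n0. \<forall>w\<in>W n. 1 - \<epsilon> < z (C \<inter> Q n w)"
    and zC: "0 < z C" and t: "0 \<le> t" "t \<le> 1"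
  shows "(\<lambda>n. \<Prod>w\<in>W n. 1 - t * (1 - z (C \<inter> Q n w))) \<longlonglongrightarrow> exp (- t * (- ln (z C)))"
proof -
  define p where "p n w = 1 - z (C \<inter> Q n w)" for n w
  define lam where "lam = - ln (z C)"
  have lam0: "0 \<le> lam" unfolding lam_def using zC z_le1[of C] by simp
  have p0: "0 \<le> p n w" for n w unfolding p_def using z_le1 by simp
  have p1: "p n w < 1" if "w \<in> W n" for n w unfolding p_def using zcell_pos[OF C zC that] by simp
  have tp: "t * p n w \<le> p n w" for n w using mult_right_mono[OF t(2) p0[of n w]] by simp
  have fpos: "0 < 1 - t * p n w" if "w \<in> W n" for n w using tp[of n w] p1[OF that] by simp
  have sumln: "(\<Sum>w\<in>W n. ln (1 - p n w)) = - lam" for n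
  proof -
    have "ln (z C) = ln (\<Prod>w\<in>W n. z (C \<inter> Q n w))" using z_cells[OF C, of n] by simp
    also have "\<dots> = (\<Sum>w\<in>W n. ln (z (C \<inter> Q n w)))"
      by (rule ln_prod[OF finite_W]) (use zcell_pos[OF C zC] in force)
    finally show ?thesis unfolding lam_def p_def by simp
  qed
  have lim: "(\<lambda>n. \<Sum>w\<in>W n. ln (1 - t * p n w)) \<longlonglongrightarrow> - t * lam"
  proof (rule LIMSEQ_I)
    fix r :: real assume r: "0 < r"
    define \<epsilon> where "\<epsilon> = min (1/2) (r / (2 * lam + 2))"
    have e0: "0 < \<epsilon>" unfolding \<epsilon>_def using r lam0 by simp
    have e1: "\<epsilon> \<le> 1/2" unfolding \<epsilon>_def by (rule min.cobounded1)
    have e2: "\<epsilon> \<le> r / (2 * lam + 2)" unfolding \<epsilon>_def by (rule min.cobounded2)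
    obtain n0 where n0: "\<forall>n\<ge>n0. \<forall>w\<in>W n. 1 - \<epsilon> < z (C \<inter> Q n w)" using small e0 by blast
    show "\<exists>no. \<forall>n\<ge>no. norm ((\<Sum>w\<in>W n. ln (1 - t * p n w)) - - t * lam) < r"
    proof (intro exI[of _ n0] allI impI)
      fix n assume n: "n0 \<le> n"
      have pe: "p n w < \<epsilon>" if "w \<in> W n" for w
      proof -
        have "1 - \<epsilon> < z (C \<inter> Q n w)" using n0 n that by blast
        then show ?thesis unfolding p_def by linarith
      qed
      have "(\<Sum>w\<in>W n. ln (1 - t * p n w)) - - t * lam = (\<Sum>w\<in>W n. ln (1 - p n w * t) - t * ln (1 - p n w))"
      proof -
        have "(\<Sum>w\<in>W n. t * ln (1 - p n w)) = t * (\<Sum>w\<in>W n. ln (1 - p n w))" by (simp add: sum_distrib_left)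
        then have "(\<Sum>w\<in>W n. t * ln (1 - p n w)) = - t * lam" using sumln[of n] by simp
        then show ?thesis by (simp add: sum_subtractf mult.commute)
      qed
      also have "norm \<dots> \<le> (\<Sum>w\<in>W n. \<bar>ln (1 - p n w * t) - t * ln (1 - p n w)\<bar>)"
        by (simp add: sum_abs)
      also have "\<dots> \<le> (\<Sum>w\<in>W n. 2 * \<epsilon> * (- ln (1 - p n w)))"
      proof (rule sum_mono)
        fix w assume w: "w \<in> W n"
        have "\<bar>ln (1 - p n w * t) - t * ln (1 - p n w)\<bar> \<le> 2 * (p n w)^2"
          by (rule ln_diff_bound) (use p0 pe[OF w] e1 t in auto)
        also have "\<dots> \<le> 2 * (\<epsilon> * p n w)"
          using mult_right_mono[OF less_imp_le[OF pe[OF w]] p0[of n w]] by (simp add: power2_eq_square)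
        also have "\<dots> \<le> 2 * (\<epsilon> * (- ln (1 - p n w)))"
          using mult_left_mono[OF ln_one_minus_pos_upper_bound[OF p0 p1[OF w], THEN le_minus_iff[THEN iffD1]], of \<epsilon>] e0
          by simp
        finally show "\<bar>ln (1 - p n w * t) - t * ln (1 - p n w)\<bar> \<le> 2 * \<epsilon> * (- ln (1 - p n w))" by simp
      qed
      also have "\<dots> = 2 * \<epsilon> * lam" using sumln[of n] by (simp add: sum_distrib_left[symmetric] sum_negf)
      also have "\<dots> < r"
      proof -
        have "2 * \<epsilon> * lam \<le> 2 * (r / (2 * lam + 2)) * lam"
          using mult_right_mono[OF mult_left_mono[OF e2, of 2] lam0] by simp
        also have "\<dots> = r * (2 * lam) / (2 * lam + 2)" by simp
        also have "\<dots> < r" using r lam0 by (simp add: divide_less_eq)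
        finally show ?thesis .
      qed
      finally show "norm ((\<Sum>w\<in>W n. ln (1 - t * p n w)) - - t * lam) < r" .
    qed
  qed
  have "(\<lambda>n. exp (\<Sum>w\<in>W n. ln (1 - t * p n w))) \<longlonglongrightarrow> exp (- t * lam)"
    by (rule tendsto_exp[OF lim])
  moreover have "exp (\<Sum>w\<in>W n. ln (1 - t * p n w)) = (\<Prod>w\<in>W n. 1 - t * (1 - z (C \<inter> Q n w)))" for n
    unfolding exp_sum[OF finite_W] p_def[symmetric]
    by (rule prod.cong[OF refl]) (use fpos in simp)
  ultimately show ?thesis unfolding lam_def by simp
qed

end

lemma exp_series_shift:
  fixes lam s :: real
  shows "(\<lambda>k. exp (- lam) * lam ^ k / fact k * s ^ k) sums exp (- (1 - s) * lam)"
proof -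
  have "(\<lambda>k. (lam * s) ^ k /\<^sub>R fact k) sums exp (lam * s)" by (rule exp_converges)
  then have "(\<lambda>k. exp (- lam) * ((lam * s) ^ k /\<^sub>R fact k)) sums (exp (- lam) * exp (lam * s))"
    by (rule sums_mult)
  moreover have "exp (- lam) * ((lam * s) ^ k /\<^sub>R fact k) = exp (- lam) * lam ^ k / fact k * s ^ k" for k
    by (simp add: power_mult_distrib divide_inverse)
  moreover have "exp (- lam) * exp (lam * s) = exp (- (1 - s) * lam)"
    by (simp add: exp_add[symmetric] algebra_simps)
  ultimately show ?thesis by simp
qed

lemma poisson_le1:
  fixes lam :: real assumes "0 \<le> lam"
  shows "exp (- lam) * lam ^ k / fact k \<le> 1"
proof -
  have "(\<lambda>k. lam ^ k /\<^sub>R fact k) sums exp lam" by (rule exp_converges)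
  then have "sum (\<lambda>k. lam ^ k /\<^sub>R fact k) {k} \<le> exp lam"
    using sum_le_suminf[of "\<lambda>k. lam ^ k /\<^sub>R fact k" "{k}"] assms
    by (simp add: sums_iff) 
  then have "lam ^ k / fact k \<le> exp lam" by (simp add: divide_inverse mult.commute)
  then have "exp (- lam) * (lam ^ k / fact k) \<le> exp (- lam) * exp lam" by (intro mult_left_mono) auto
  then show ?thesis by (simp add: exp_minus field_simps)
qed

context kpg begin

lemma gs_series:
  assumes C: "C \<in> sets borel" and s: "0 \<le> s" "s < 1"
  shows "(\<lambda>k. prob {\<omega> \<in> space M. pcount N X C \<omega> = enat k} * s ^ k) sums expectation (\<lambda>\<omega>. gs s (pcount N X C \<omega>))"
proof -
  define Ek where "Ek k = {\<omega> \<in> space M. pcount N X C \<omega> = enat k}" for k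
  have Ek: "Ek k \<in> events" for k unfolding Ek_def by (rule pcount_enat_sets[OF C])
  define h where "h K \<omega> = (\<Sum>k<K. indicator (Ek k) \<omega> * s ^ k)" for K \<omega>
  have h_alt: "h K \<omega> = (case pcount N X C \<omega> of enat j \<Rightarrow> if j < K then s ^ j else 0 | \<infinity> \<Rightarrow> 0)"
    if \<omega>: "\<omega> \<in> space M" for K \<omega>
  proof (cases "pcount N X C \<omega>")
    case (enat j)
    have "h K \<omega> = (\<Sum>k<K. if k = j then s ^ k else 0)" unfolding h_def Ek_def
      by (rule sum.cong) (use \<omega> enat in \<open>auto simp: indicator_def\<close>)
    also have "\<dots> = (if j < K then s ^ j else 0)" by (simp add: sum.delta')
    finally show ?thesis using enat by simp
  next
    case infinity
    then show ?thesis unfolding h_def Ek_def by (simp add: indicator_def)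
  qed
  have eh: "expectation (h K) = (\<Sum>k<K. prob (Ek k) * s ^ k)" for K
  proof -
    have "expectation (h K) = (\<Sum>k<K. expectation (\<lambda>\<omega>. indicator (Ek k) \<omega> * s ^ k))"
      unfolding h_def by (rule Bochner_Integration.integral_sum) (use Ek in \<open>auto simp: less_top[symmetric]\<close>)
    also have "\<dots> = (\<Sum>k<K. prob (Ek k) * s ^ k)"
      by (rule sum.cong[OF refl]) (use Ek in \<open>simp add: integral_mult_left_zero emeasure_eq_measure\<close>)
    finally show ?thesis .
  qed
  have "(\<lambda>K. expectation (h K)) \<longlonglongrightarrow> expectation (\<lambda>\<omega>. gs s (pcount N X C \<omega>))"
  proof (rule integral_dominated_convergence[where w="\<lambda>_. 1"])
    show "(\<lambda>\<omega>. gs s (pcount N X C \<omega>)) \<in> borel_measurable M" by (rule gs_meas[OF C])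
    show "h K \<in> borel_measurable M" for K unfolding h_def using Ek by measurable
    show "integrable M (\<lambda>_. 1::real)" by simp
    show "AE \<omega> in M. norm (h K \<omega>) \<le> 1" for K
    proof (rule AE_I2)
      fix \<omega> assume \<omega>: "\<omega> \<in> space M"
      show "norm (h K \<omega>) \<le> 1" unfolding h_alt[OF \<omega>] using s
        by (cases "pcount N X C \<omega>") (auto simp: power_le_one)
    qed
    show "AE \<omega> in M. (\<lambda>K. h K \<omega>) \<longlonglongrightarrow> gs s (pcount N X C \<omega>)"
    proof (rule AE_I2)
      fix \<omega> assume \<omega>: "\<omega> \<in> space M"
      show "(\<lambda>K. h K \<omega>) \<longlonglongrightarrow> gs s (pcount N X C \<omega>)"
      proof (cases "pcount N X C \<omega>")
        case (enat j)
        have "eventually (\<lambda>K. h K \<omega> = gs s (pcount N X C \<omega>)) sequentially"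
          unfolding eventually_sequentially
          by (intro exI[of _ "Suc j"]) (auto simp: h_alt[OF \<omega>] enat gs_def)
        then show ?thesis by (rule tendsto_eventually)
      next
        case infinity
        then show ?thesis unfolding h_alt[OF \<omega>] by (simp add: gs_def)
      qed
    qed
  qed
  then show ?thesis unfolding sums_def eh Ek_def .
qed

lemma caseB:
  assumes C: "C \<in> sets borel" and small: "\<forall>\<epsilon>>0. \<exists>n. \<forall>w\<in>W n. 1 - \<epsilon> < z (C \<inter> Q n w)"
  shows "0 < z C \<and> (\<forall>k. prob {\<omega> \<in> space M. pcount N X C \<omega> = enat k}
            = exp (- (- ln (z C))) * (- ln (z C)) ^ k / fact k)"
proof -
  have small': "\<forall>\<epsilon>>0. \<exists>n0. \<forall>n\<ge>n0. \<forall>w\<in>W n. 1 - \<epsilon> < z (C \<inter> Q n w)"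
  proof (intro allI impI)
    fix \<epsilon> :: real assume "0 < \<epsilon>"
    then obtain n0 where n0: "\<forall>w\<in>W n0. 1 - \<epsilon> < z (C \<inter> Q n0 w)" using small by blast
    show "\<exists>n0. \<forall>n\<ge>n0. \<forall>w\<in>W n. 1 - \<epsilon> < z (C \<inter> Q n w)"
    proof (intro exI[of _ n0] allI impI ballI)
      fix n w assume n: "n0 \<le> n" and w: "w \<in> W n"
      have "z (C \<inter> Q n0 (trunc n0 w)) \<le> z (C \<inter> Q n w)"
        using Q_sub[OF n, of w] C Q_borel by (intro z_mono) auto
      moreover have "1 - \<epsilon> < z (C \<inter> Q n0 (trunc n0 w))" using n0 trunc_W by blast
      ultimately show "1 - \<epsilon> < z (C \<inter> Q n w)" by simp
    qed
  qed
  have zC: "0 < z C"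
  proof -
    obtain n0 where n0: "\<forall>w\<in>W n0. 1 - 1/2 < z (C \<inter> Q n0 w)" using small[rule_format, of "1/2"] by auto
    have "0 < (\<Prod>w\<in>W n0. z (C \<inter> Q n0 w))" by (rule prod_pos) (use n0 in force)
    then show ?thesis using z_cells[OF C, of n0] by simp
  qed
  define lam where "lam = - ln (z C)"
  have lam0: "0 \<le> lam" unfolding lam_def using zC z_le1[of C] by simp
  define a where "a k = prob {\<omega> \<in> space M. pcount N X C \<omega> = enat k}" for k
  define b where "b k = exp (- lam) * lam ^ k / fact k" for k
  have EG: "expectation (\<lambda>\<omega>. gs s (pcount N X C \<omega>)) = exp (- (1 - s) * lam)" if s: "0 \<le> s" "s < 1" for s
  proof -
    have "(\<lambda>n. expectation (\<lambda>\<omega>. s ^ S n C \<omega>)) \<longlonglongrightarrow> exp (- (1 - s) * lam)"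
    proof -
      have "(\<lambda>n. \<Prod>w\<in>W n. 1 - (1 - s) * (1 - z (C \<inter> Q n w))) \<longlonglongrightarrow> exp (- (1 - s) * lam)"
        unfolding lam_def by (rule prod_lim[OF C small' zC]) (use s in auto)
      moreover have "expectation (\<lambda>\<omega>. s ^ S n C \<omega>) = (\<Prod>w\<in>W n. 1 - (1 - s) * (1 - z (C \<inter> Q n w)))" for n
        unfolding GF_n[OF C] by (rule prod.cong) (auto simp: algebra_simps)
      ultimately show ?thesis by simp
    qed
    from LIMSEQ_unique[OF GF_lim[OF C s] this] show ?thesis .
  qed
  have eq: "a k = b k" for k
  proof -
    have "(a k - b k) = 0"
    proof (rule powser_coeff_zero[where d="\<lambda>k. a k - b k" and B=2])
      fix s :: real assume s: "0 < s" "s < 1"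
      have "(\<lambda>k. a k * s ^ k) sums exp (- (1 - s) * lam)"
        using gs_series[OF C, of s] s EG[of s] unfolding a_def by simp
      moreover have "(\<lambda>k. b k * s ^ k) sums exp (- (1 - s) * lam)"
        unfolding b_def by (rule exp_series_shift)
      ultimately have "(\<lambda>k. a k * s ^ k - b k * s ^ k) sums (exp (- (1 - s) * lam) - exp (- (1 - s) * lam))"
        by (rule sums_diff)
      then show "(\<lambda>i. (a i - b i) * s ^ i) sums 0" by (simp add: algebra_simps)
    next
      fix i
      have "0 \<le> a i" "a i \<le> 1" unfolding a_def by auto
      moreover have "0 \<le> b i" "b i \<le> 1" unfolding b_def using lam0 poisson_le1[OF lam0] by auto
      ultimately show "\<bar>a i - b i\<bar> \<le> 2" by simp
    qed
    then show ?thesis by simp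
  qed
  show ?thesis using zC eq unfolding a_def b_def lam_def by simp
qed

end

lemma poisson_sums1: fixes lam :: real shows "(\<lambda>k. exp (- lam) * lam ^ k / fact k) sums 1"
  using exp_series_shift[of lam 1] by simp

lemma poisson_mean: fixes lam :: real shows "(\<lambda>k. real k * (exp (- lam) * lam ^ k / fact k)) sums lam"
proof -
  have "(\<lambda>k. lam * (exp (- lam) * lam ^ k / fact k)) sums (lam * 1)"
    by (rule sums_mult[OF poisson_sums1])
  moreover have "real (Suc k) * (exp (- lam) * lam ^ Suc k / fact (Suc k)) = lam * (exp (- lam) * lam ^ k / fact k)" for k
  proof -
    have f: "(fact (Suc k) :: real) = real (Suc k) * fact k" by (simp only: fact_Suc)
    have "real (Suc k) * (exp (- lam) * lam ^ Suc k / fact (Suc k)) = (real (Suc k) * (exp (- lam) * lam ^ Suc k)) / (real (Suc k) * fact k)"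
      unfolding f by simp
    also have "\<dots> = exp (- lam) * lam ^ Suc k / fact k" by (rule mult_divide_mult_cancel_left) simp
    finally show ?thesis by simp
  qed
  ultimately have "(\<lambda>k. real (Suc k) * (exp (- lam) * lam ^ Suc k / fact (Suc k))) sums lam" by (simp add: ac_simps)
  from sums_Suc[OF this] show ?thesis by simp
qed

context kpg begin

lemma KT:
  assumes C: "C \<in> sets borel"
  shows "(z C = 0 \<and> (AE \<omega> in M. pcount N X C \<omega> = \<infinity>)) \<or>
         (0 < z C \<and> (\<forall>k. prob {\<omega> \<in> space M. pcount N X C \<omega> = enat k}
            = exp (- (- ln (z C))) * (- ln (z C)) ^ k / fact k))"
proof (cases "\<exists>\<epsilon>>0. \<forall>n. \<exists>w\<in>W n. z (C \<inter> Q n w) \<le> 1 - \<epsilon>")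
  case True
  then obtain \<epsilon> where "\<epsilon> > 0" "\<forall>n. \<exists>w\<in>W n. z (C \<inter> Q n w) \<le> 1 - \<epsilon>" by blast
  from caseA[OF C this] show ?thesis by blast
next
  case False
  then have "\<forall>\<epsilon>>0. \<exists>n. \<forall>w\<in>W n. 1 - \<epsilon> < z (C \<inter> Q n w)" by (auto simp: not_le)
  from caseB[OF C this] show ?thesis by blast
qed

lemma B_facts:
  assumes C: "C \<in> sets borel" and zC: "0 < z C"
    and pmf: "\<forall>k. prob {\<omega> \<in> space M. pcount N X C \<omega> = enat k} = exp (- (- ln (z C))) * (- ln (z C)) ^ k / fact k"
  shows "AE \<omega> in M. pcount N X C \<omega> \<noteq> \<infinity>"
    and "(\<integral>\<^sup>+\<omega>. ennreal_of_enat (pcount N X C \<omega>) \<partial>M) = ennreal (- ln (z C))"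
proof -
  define lam where "lam = - ln (z C)"
  have lam0: "0 \<le> lam" unfolding lam_def using zC z_le1[of C] by simp
  define b where "b k = exp (- lam) * lam ^ k / fact k" for k
  define Ek where "Ek k = {\<omega> \<in> space M. pcount N X C \<omega> = enat k}" for k
  have Ek: "Ek k \<in> events" for k unfolding Ek_def by (rule pcount_enat_sets[OF C])
  have pEk: "prob (Ek k) = b k" for k using pmf unfolding Ek_def b_def lam_def by simp
  have dEk: "disjoint_family Ek" unfolding disjoint_family_on_def Ek_def by auto
  have "(\<lambda>k. prob (Ek k)) sums prob (\<Union>k. Ek k)"
    by (rule finite_measure_UNION) (use Ek dEk in auto)
  moreover have "(\<lambda>k. prob (Ek k)) sums 1" unfolding pEk b_def by (rule poisson_sums1)
  ultimately have pU: "prob (\<Union>k. Ek k) = 1" using sums_unique2 by blast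
  have "prob (space M - (\<Union>k. Ek k)) = 0"
    using prob_compl[of "\<Union>k. Ek k"] pU Ek by auto
  then have aeU: "AE \<omega> in M. \<omega> \<notin> space M - (\<Union>k. Ek k)"
    using prob_eq_0[of "space M - (\<Union>k. Ek k)"] Ek by auto
  have ae_fin: "AE \<omega> in M. \<exists>k. pcount N X C \<omega> = enat k"
    using aeU AE_space by eventually_elim (auto simp: Ek_def)
  show "AE \<omega> in M. pcount N X C \<omega> \<noteq> \<infinity>"
    using ae_fin by (rule eventually_mono) auto
  have ptw: "AE \<omega> in M. ennreal_of_enat (pcount N X C \<omega>) = (\<Sum>k. of_nat k * indicator (Ek k) \<omega>)"
    using aeU AE_space
  proof eventually_elim
    case (elim \<omega>)
    then obtain j where j: "pcount N X C \<omega> = enat j" unfolding Ek_def by auto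
    have "(\<lambda>k. of_nat k * indicator (Ek k) \<omega> :: ennreal) = (\<lambda>k. if k = j then of_nat j else 0)"
      using elim j unfolding Ek_def by (auto simp: indicator_def fun_eq_iff)
    moreover have "(\<lambda>k. if k = j then (of_nat j :: ennreal) else 0) sums of_nat j"
      using sums_single[of j "\<lambda>_. (of_nat j :: ennreal)"] by simp
    ultimately show ?case using j by (simp add: sums_iff)
  qed
  have "(\<integral>\<^sup>+\<omega>. ennreal_of_enat (pcount N X C \<omega>) \<partial>M) = (\<integral>\<^sup>+\<omega>. (\<Sum>k. of_nat k * indicator (Ek k) \<omega>) \<partial>M)"
    by (rule nn_integral_cong_AE[OF ptw])
  also have "\<dots> = (\<Sum>k. \<integral>\<^sup>+\<omega>. of_nat k * indicator (Ek k) \<omega> \<partial>M)"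
    by (rule nn_integral_suminf) (use Ek in auto)
  also have "\<dots> = (\<Sum>k. ennreal (real k * b k))"
  proof (rule suminf_cong)
    fix k
    have "(\<integral>\<^sup>+\<omega>. of_nat k * indicator (Ek k) \<omega> \<partial>M) = of_nat k * emeasure M (Ek k)"
      by (rule nn_integral_cmult_indicator[OF Ek])
    also have "\<dots> = ennreal (real k) * ennreal (b k)"
      using pEk[of k] Ek[of k] by (simp add: emeasure_eq_measure ennreal_of_nat_eq_real_of_nat)
    also have "\<dots> = ennreal (real k * b k)"
      by (rule ennreal_mult[symmetric]) (use lam0 in \<open>auto simp: b_def\<close>)
    finally show "(\<integral>\<^sup>+\<omega>. of_nat k * indicator (Ek k) \<omega> \<partial>M) = ennreal (real k * b k)" .
  qed
  also have "\<dots> = ennreal (\<Sum>k. real k * b k)"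
    by (rule suminf_ennreal2) (use lam0 poisson_mean[of lam] in \<open>auto simp: b_def sums_iff\<close>)
  also have "\<dots> = ennreal lam" using poisson_mean[of lam] unfolding b_def by (simp add: sums_iff)
  finally show "(\<integral>\<^sup>+\<omega>. ennreal_of_enat (pcount N X C \<omega>) \<partial>M) = ennreal (- ln (z C))" unfolding lam_def .
qed

end

context kpg begin

lemma pcount_meas_gen:
  assumes sp: "space M' = space M" and VV: "\<And>n w. V (C \<inter> Q n w) \<in> sets M'"
  shows "pcount N X C \<in> measurable M' (count_space UNIV)"
proof -
  have Srm: "Sr n C \<in> borel_measurable M'" for n
  proof -
    have "space M - V (C \<inter> Q n w) \<in> sets M'" for w using VV[of n w] sp sets.compl_sets[of "V (C \<inter> Q n w)" M'] by simp
    then show ?thesis unfolding Sr_def by (intro borel_measurable_sum borel_measurable_indicator) auto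
  qed
  have Seq: "{\<omega> \<in> space M'. S n C \<omega> = k} \<in> sets M'" for n k
  proof -
    have "{\<omega> \<in> space M'. S n C \<omega> = k} = {\<omega> \<in> space M'. Sr n C \<omega> = real k}"
      using Sr_S sp by auto
    also have "\<dots> \<in> sets M'" using Srm[of n] by measurable
    finally show ?thesis .
  qed
  have [measurable]: "Measurable.pred M' (\<lambda>\<omega>. S n C \<omega> = k)" for n k
    using Seq unfolding Measurable.pred_def .
  have Pk: "{\<omega> \<in> space M'. pcount N X C \<omega> = enat k} \<in> sets M'" for k
  proof -
    have "{\<omega> \<in> space M'. pcount N X C \<omega> = enat k} = {\<omega> \<in> space M'. \<exists>n0. \<forall>n\<ge>n0. S n C \<omega> = k}"
      using pcount_eq_enat by auto
    also have "\<dots> \<in> sets M'" by measurable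
    finally show ?thesis .
  qed
  have c: "countable (UNIV :: enat set)" by simp
  show ?thesis unfolding measurable_count_space_eq_countable[OF c]
  proof (intro conjI ballI)
    show "pcount N X C \<in> space M' \<rightarrow> UNIV" by simp
    fix a :: enat
    show "pcount N X C -` {a} \<inter> space M' \<in> sets M'"
    proof (cases a)
      case (enat k)
      have "pcount N X C -` {a} \<inter> space M' = {\<omega> \<in> space M'. pcount N X C \<omega> = enat k}" using enat by auto
      then show ?thesis using Pk by simp
    next
      case infinity
      have "pcount N X C -` {a} \<inter> space M' = space M' - (\<Union>k. {\<omega> \<in> space M'. pcount N X C \<omega> = enat k})"
      proof (intro equalityI subsetI)
        fix \<omega> assume "\<omega> \<in> space M' - (\<Union>k. {\<omega> \<in> space M'. pcount N X C \<omega> = enat k})"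
        then show "\<omega> \<in> pcount N X C -` {a} \<inter> space M'" using infinity by (cases "pcount N X C \<omega>") auto
      qed (use infinity in auto)
      also have "\<dots> \<in> sets M'" using Pk by auto
      finally show ?thesis .
    qed
  qed
qed

lemma pcount_add:
  assumes "D1 \<inter> D2 = {}"
  shows "pcount N X (D1 \<union> D2) \<omega> = pcount N X D1 \<omega> + pcount N X D2 \<omega>"
proof -
  have U: "(D1 \<union> D2) \<inter> rset N X \<omega> = (D1 \<inter> rset N X \<omega>) \<union> (D2 \<inter> rset N X \<omega>)" by blast
  have I: "(D1 \<inter> rset N X \<omega>) \<inter> (D2 \<inter> rset N X \<omega>) = {}" using assms by blast
  show ?thesis
  proof (cases "finite (D1 \<inter> rset N X \<omega>) \<and> finite (D2 \<inter> rset N X \<omega>)")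
    case True
    then show ?thesis unfolding pcount_def U using card_Un_disjoint[OF _ _ I] by simp
  next
    case False
    then show ?thesis unfolding pcount_def U by auto
  qed
qed

lemma pcount_mono_inf:
  assumes "D1 \<inter> D2 = {}" "pcount N X D1 \<omega> = \<infinity>"
  shows "pcount N X (D1 \<union> D2) \<omega> = \<infinity>"
  using pcount_add[OF assms(1)] assms(2) by simp

lemma ennpc_meas: assumes "C \<in> sets borel"
  shows "(\<lambda>\<omega>. ennreal_of_enat (pcount N X C \<omega>)) \<in> borel_measurable M"
proof -
  have "ennreal_of_enat \<in> measurable (count_space UNIV) borel" by simp
  from measurable_compose[OF pcount_meas[OF assms] this] show ?thesis .
qed

lemma z_add:
  assumes D1: "D1 \<in> sets borel" and D2: "D2 \<in> sets borel" and disj: "D1 \<inter> D2 = {}"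
  shows "z (D1 \<union> D2) = z D1 * z D2"
proof -
  define D where "D = D1 \<union> D2"
  have D: "D \<in> sets borel" unfolding D_def using D1 D2 by simp
  have fin_of_B: "AE \<omega> in M. pcount N X C \<omega> \<noteq> \<infinity>" if "C \<in> sets borel" "0 < z C" for C
    using KT[OF that(1)] that(2) B_facts(1)[OF that(1) that(2)] by auto
  have pos_of_fin: "0 < z C" if C: "C \<in> sets borel" and f: "AE \<omega> in M. pcount N X C \<omega> \<noteq> \<infinity>" for C
  proof (rule ccontr)
    assume "\<not> 0 < z C"
    then have "AE \<omega> in M. pcount N X C \<omega> = \<infinity>" using KT[OF C] by auto
    with f have "AE \<omega> in M. False" by eventually_elim simp
    then show False by (simp add: AE_False)
  qed
  show ?thesis
  proof (cases "0 < z D")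
    case False
    have "z D1 = 0 \<or> z D2 = 0"
    proof (rule ccontr)
      assume "\<not> (z D1 = 0 \<or> z D2 = 0)"
      then have p: "0 < z D1" "0 < z D2" using z_nonneg[of D1] z_nonneg[of D2] by auto
      have "AE \<omega> in M. pcount N X D \<omega> \<noteq> \<infinity>"
        using fin_of_B[OF D1 p(1)] fin_of_B[OF D2 p(2)]
        by eventually_elim (auto simp: D_def pcount_add[OF disj] plus_eq_infty_iff_enat)
      then have "0 < z D" by (rule pos_of_fin[OF D])
      then show False using False by simp
    qed
    moreover have "z D = 0" using False z_nonneg[of D] by simp
    ultimately show ?thesis unfolding D_def by auto
  next
    case True
    have pmfD: "\<forall>k. prob {\<omega> \<in> space M. pcount N X D \<omega> = enat k} = exp (- (- ln (z D))) * (- ln (z D)) ^ k / fact k"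
      using KT[OF D] True by auto
    have fD: "AE \<omega> in M. pcount N X D \<omega> \<noteq> \<infinity>" by (rule fin_of_B[OF D True])
    have f1: "AE \<omega> in M. pcount N X D1 \<omega> \<noteq> \<infinity>"
      using fD by eventually_elim (auto simp: D_def pcount_add[OF disj] plus_eq_infty_iff_enat)
    have f2: "AE \<omega> in M. pcount N X D2 \<omega> \<noteq> \<infinity>"
      using fD by eventually_elim (auto simp: D_def pcount_add[OF disj] plus_eq_infty_iff_enat)
    have p1: "0 < z D1" by (rule pos_of_fin[OF D1 f1])
    have p2: "0 < z D2" by (rule pos_of_fin[OF D2 f2])
    have pmf1: "\<forall>k. prob {\<omega> \<in> space M. pcount N X D1 \<omega> = enat k} = exp (- (- ln (z D1))) * (- ln (z D1)) ^ k / fact k"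
      using KT[OF D1] p1 by auto
    have pmf2: "\<forall>k. prob {\<omega> \<in> space M. pcount N X D2 \<omega> = enat k} = exp (- (- ln (z D2))) * (- ln (z D2)) ^ k / fact k"
      using KT[OF D2] p2 by auto
    have "ennreal (- ln (z D)) = (\<integral>\<^sup>+\<omega>. ennreal_of_enat (pcount N X D \<omega>) \<partial>M)"
      using B_facts(2)[OF D True pmfD] by simp
    also have "\<dots> = (\<integral>\<^sup>+\<omega>. ennreal_of_enat (pcount N X D1 \<omega>) + ennreal_of_enat (pcount N X D2 \<omega>) \<partial>M)"
      unfolding D_def pcount_add[OF disj] by simp
    also have "\<dots> = (\<integral>\<^sup>+\<omega>. ennreal_of_enat (pcount N X D1 \<omega>) \<partial>M) + (\<integral>\<^sup>+\<omega>. ennreal_of_enat (pcount N X D2 \<omega>) \<partial>M)"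
      by (rule nn_integral_add) (use ennpc_meas D1 D2 in auto)
    also have "\<dots> = ennreal (- ln (z D1)) + ennreal (- ln (z D2))"
      using B_facts(2)[OF D1 p1 pmf1] B_facts(2)[OF D2 p2 pmf2] by simp
    also have "\<dots> = ennreal (- ln (z D1) + - ln (z D2))"
      using p1 p2 z_le1[of D1] z_le1[of D2] by (intro ennreal_plus[symmetric]) auto
    finally have e: "ennreal (- ln (z D)) = ennreal (- ln (z D1) + - ln (z D2))" .
    have l: "ln (z D) \<le> 0" "ln (z D1) \<le> 0" "ln (z D2) \<le> 0"
      using True p1 p2 z_le1[of D] z_le1[of D1] z_le1[of D2] by simp_all
    have "- ln (z D) = - ln (z D1) + - ln (z D2)"
      using ennreal_inj[of "- ln (z D)" "- ln (z D1) + - ln (z D2)"] e l by simp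
    then have "ln (z D) = ln (z D1 * z D2)" using p1 p2 by (simp add: ln_mult)
    then have "z D = z D1 * z D2" using True p1 p2 by simp
    then show ?thesis unfolding D_def .
  qed
qed

lemma z_prod_fin:
  assumes J: "finite J" and D: "\<And>i. i \<in> J \<Longrightarrow> D i \<in> sets borel" and disj: "disjoint_family_on D J"
  shows "z (\<Union>i\<in>J. D i) = (\<Prod>i\<in>J. z (D i))"
  using J D disj
proof (induction J rule: finite_induct)
  case empty then show ?case by (simp add: z_empty)
next
  case (insert x F)
  have "z (\<Union>i\<in>insert x F. D i) = z (D x \<union> (\<Union>i\<in>F. D i))" by simp
  also have "\<dots> = z (D x) * z (\<Union>i\<in>F. D i)"
  proof (rule z_add)
    show "D x \<in> sets borel" using insert by simp
    show "(\<Union>i\<in>F. D i) \<in> sets borel" using insert by (intro sets.finite_UN) auto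
    show "D x \<inter> (\<Union>i\<in>F. D i) = {}" using insert.prems(2) insert.hyps(2)
      unfolding disjoint_family_on_def by fastforce
  qed
  also have "z (\<Union>i\<in>F. D i) = (\<Prod>i\<in>F. z (D i))"
    using insert by (intro insert.IH) (auto simp: disjoint_family_on_def)
  finally show ?case using insert by simp
qed

end

context kpg begin

lemma indep_pc:
  assumes B: "\<forall>i<n. B i \<in> sets borel" and disj: "disjoint_family_on B {..<n}"
  shows "indep_vars (\<lambda>i. count_space UNIV) (\<lambda>i. pcount N X (B i)) {..<n}"
proof -
  define Gi where "Gi i = {V D | D. D \<in> sets borel \<and> D \<subseteq> B i}" for i
  have Gev: "Gi i \<subseteq> events" for i unfolding Gi_def by auto
  have GPow: "Gi i \<subseteq> Pow (space M)" for i unfolding Gi_def V_def by auto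
  have indG: "indep_sets Gi {..<n}"
  proof (rule indep_setsI)
    show "Gi i \<subseteq> events" for i by (rule Gev)
    fix A J assume J: "J \<noteq> {}" "J \<subseteq> {..<n}" "finite J" and A: "\<forall>j\<in>J. A j \<in> Gi j"
    then have "\<forall>j\<in>J. \<exists>D. A j = V D \<and> D \<in> sets borel \<and> D \<subseteq> B j" unfolding Gi_def by blast
    then obtain D where D: "\<And>j. j \<in> J \<Longrightarrow> A j = V (D j) \<and> D j \<in> sets borel \<and> D j \<subseteq> B j" by metis
    have "(\<Inter>j\<in>J. A j) = V (\<Union>j\<in>J. D j)" using J(1) D unfolding V_def by auto
    then have "prob (\<Inter>j\<in>J. A j) = z (\<Union>j\<in>J. D j)" unfolding z_def by simp
    also have "\<dots> = (\<Prod>j\<in>J. z (D j))"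
    proof (rule z_prod_fin[OF J(3)])
      show "D j \<in> sets borel" if "j \<in> J" for j using D[OF that] by simp
      show "disjoint_family_on D J" unfolding disjoint_family_on_def
      proof (intro ballI impI)
        fix j k assume jk: "j \<in> J" "k \<in> J" "j \<noteq> k"
        then have "B j \<inter> B k = {}" using disj J(2) unfolding disjoint_family_on_def by auto
        then show "D j \<inter> D k = {}" using D[OF jk(1)] D[OF jk(2)] by blast
      qed
    qed
    also have "\<dots> = (\<Prod>j\<in>J. prob (A j))" unfolding z_def using D by simp
    finally show "prob (\<Inter>j\<in>J. A j) = (\<Prod>j\<in>J. prob (A j))" .
  qed
  have stab: "Int_stable (Gi i)" for i
    unfolding Int_stable_def Gi_def
  proof (intro ballI)
    fix a b assume "a \<in> {V D |D. D \<in> sets borel \<and> D \<subseteq> B i}" "b \<in> {V D |D. D \<in> sets borel \<and> D \<subseteq> B i}"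
    then obtain D1 D2 where "a = V D1" "D1 \<in> sets borel" "D1 \<subseteq> B i" "b = V D2" "D2 \<in> sets borel" "D2 \<subseteq> B i" by blast
    then show "a \<inter> b \<in> {V D |D. D \<in> sets borel \<and> D \<subseteq> B i}"
      by (intro CollectI exI[of _ "D1 \<union> D2"]) (auto simp: V_Un)
  qed
  have indS: "indep_sets (\<lambda>i. sigma_sets (space M) (Gi i)) {..<n}"
    by (rule indep_sets_sigma[OF indG stab])
  show ?thesis unfolding indep_vars_def2
  proof (intro conjI ballI)
    fix i assume i: "i \<in> {..<n}"
    show "random_variable (count_space UNIV) (pcount N X (B i))" using B i by (intro pcount_meas) auto
  next
    show "indep_sets (\<lambda>i. {pcount N X (B i) -` A \<inter> space M |A. A \<in> sets (count_space UNIV)}) {..<n}"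
    proof (rule indep_sets_mono_sets[OF indS])
      fix i assume i: "i \<in> {..<n}"
      define Mi where "Mi = sigma (space M) (Gi i)"
      have sMi: "sets Mi = sigma_sets (space M) (Gi i)" unfolding Mi_def by (rule sets_measure_of[OF GPow])
      have spMi: "space Mi = space M" unfolding Mi_def by (rule space_measure_of[OF GPow])
      have meas: "pcount N X (B i) \<in> measurable Mi (count_space UNIV)"
      proof (rule pcount_meas_gen[OF spMi])
        fix m w
        have "B i \<inter> Q m w \<in> sets borel" using B i Q_borel by auto
        then have "V (B i \<inter> Q m w) \<in> Gi i" unfolding Gi_def by blast
        then show "V (B i \<inter> Q m w) \<in> sets Mi" unfolding sMi by auto
      qed
      show "{pcount N X (B i) -` A \<inter> space M |A. A \<in> sets (count_space UNIV)} \<subseteq> sigma_sets (space M) (Gi i)"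
      proof
        fix x assume "x \<in> {pcount N X (B i) -` A \<inter> space M |A. A \<in> sets (count_space UNIV)}"
        then obtain A where "x = pcount N X (B i) -` A \<inter> space M" by blast
        moreover have "pcount N X (B i) -` A \<inter> space Mi \<in> sets Mi" using meas by (rule measurable_sets) simp
        ultimately show "x \<in> sigma_sets (space M) (Gi i)" using sMi spMi by simp
      qed
    qed
  qed
qed

lemma poisson_each:
  assumes C: "C \<in> sets borel"
  shows "\<exists>\<mu>. poisson_enat M (pcount N X C) \<mu>"
proof -
  from KT[OF C] show ?thesis
  proof
    assume "z C = 0 \<and> (AE \<omega> in M. pcount N X C \<omega> = \<infinity>)"
    then show ?thesis by (intro exI[of _ \<infinity>]) (simp add: poisson_enat_def)
  next
    assume a: "0 < z C \<and> (\<forall>k. prob {\<omega> \<in> space M. pcount N X C \<omega> = enat k}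
            = exp (- (- ln (z C))) * (- ln (z C)) ^ k / fact k)"
    have l: "0 \<le> - ln (z C)" using a z_le1[of C] by simp
    show ?thesis using a l by (intro exI[of _ "ennreal (- ln (z C))"]) (simp add: poisson_enat_def)
  qed
qed

end

theorem lemma9p5:
  fixes M :: "('w::polish_space) measure"
    and N :: "'w \<Rightarrow> enat"
    and X :: "nat \<Rightarrow> 'w \<Rightarrow> 't::polish_space"
    and \<A> :: "'t set set"
  assumes "standard_prob_space M"
    and "random_countable_set M N X"
    and "algebra UNIV \<A>"
    and "\<A> \<subseteq> sets (borel :: 't measure)"
    and "sigma_sets UNIV \<A> = sets (borel :: 't measure)"
    and "independence_condition M N X \<A>"
    and "\<And>t. measure M {\<omega> \<in> space M. t \<in> rset N X \<omega>} = 0"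
  shows "kingman_poisson M N X"
proof -
  have ps: "prob_space M"
  proof -
    obtain M0 where M0: "prob_space M0" "M = M0 \<or> M = completion M0"
      using assms(1) unfolding standard_prob_space_def by blast
    then show ?thesis using prob_space.prob_space_completion[OF M0(1)] by auto
  qed
  obtain G :: "nat \<Rightarrow> 't set" where G: "(\<forall>i. G i \<in> \<A>) \<and> (\<forall>s t. s \<noteq> t \<longrightarrow> (\<exists>i. (s \<in> G i) \<noteq> (t \<in> G i)))"
    using sep_seq[OF assms(3) assms(5)] by auto
  have rc: "N \<in> measurable M (count_space UNIV)" "\<And>j. X j \<in> measurable M borel"
    using assms(2) unfolding random_countable_set_def by auto
  have "kp_axioms M N X \<A>"
    by (rule kp_axioms.intro[OF rc(1) rc(2) assms(3) assms(4) assms(5) assms(6) assms(7)])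
  then have kp: "kp M N X \<A>" using ps by (intro kp.intro)
  have "kpg_axioms \<A> G"
  proof (rule kpg_axioms.intro)
    show "G i \<in> \<A>" for i using G by simp
    show "\<exists>i. (s \<in> G i) \<noteq> (t \<in> G i)" if "s \<noteq> t" for s t using G that by simp
  qed
  with kp have "kpg M N X \<A> G" by (rule kpg.intro)
  then interpret K: kpg M N X \<A> G .
  show ?thesis unfolding kingman_poisson_def
  proof (intro conjI ballI allI impI)
    fix B :: "'t set" assume "B \<in> sets borel"
    then show "pcount N X B \<in> measurable M (count_space UNIV)" by (rule K.pcount_meas)
  next
    fix B :: "'t set" assume "B \<in> sets borel"
    then show "\<exists>\<mu>. poisson_enat M (pcount N X B) \<mu>" by (rule K.poisson_each)
  next
    fix n and B :: "nat \<Rightarrow> 't set"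
    assume "\<forall>i<n. B i \<in> sets borel" "disjoint_family_on B {..<n}"
    then show "prob_space.indep_vars M (\<lambda>i. count_space UNIV) (\<lambda>i. pcount N X (B i)) {..<n}"
      by (rule K.indep_pc)
  qed
qed

end
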